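(* Let $\Psi=\{|\psi_i\rangle\}$ be a family of multi-qubit states that is a universal resource under local projective measurements up to local unitary operations. Then, for any encoding $\{|\mathbf0\rangle,|\mathbf1\rangle\}$, the encoded version $\boldsymbol\Psi$ of the family is an encoded universal resource under LOCC up to logical local unitary operations.
   Context: $\Psi$ is a universal resource under local projective measurements up to local unitary operations if for every $n$ and every $n$-qubit state $|\phi\rangle$ there is $|\psi_i\rangle\in\Psi$ and a (possibly adaptive) sequence of single-qubit projective measurements on all but a fixed set of $n$ qubits of $|\psi_i\rangle$ such that in every branch the unmeasured $n$ qubits are in the state $(U_1\otimes\cdots\otimes U_n)|\phi\rangle$ for some single-qubit unitaries $U_k$ (depending on the branch). An encoding is a fixed pair of orthogonal $m$-qubit states $|\mathbf0\rangle,|\mathbf1\rangle$; the encoded version of an $N$-qubit state $\sum c_{i_1\dots i_N}|i_1\dots i_N\rangle$ is the $mN$-qubit state $\sum c_{i_1\dots i_N}|\mathbf i_1\rangle_{A_1}\cdots|\mathbf i_N\rangle_{A_N}$, where $A_k$ are disjoint blocks of $m$ qubits; $\boldsymbol\Psi$ consists of the encoded versions of the members of $\Psi$. For a one-qubit operator $U=\sum_{a,b}u_{ab}|a\rangle\langle b|$, its logical version is $\mathbf U=\sum_{a,b}u_{ab}|\mathbf a\rangle\langle\mathbf b|$ acting on a block. "Encoded universal resource under LOCC up to logical local unitary operations" means: for every $n$ and every $n$-qubit $|\phi\rangle$ there is a member of $\boldsymbol\Psi$ and an LOCC protocol (each physical qubit a separate party) which, exactly and with probability one, leaves a fixed set of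 $n$ blocks in the state $(\mathbf U_1\otimes\cdots\otimes\mathbf U_n)|\boldsymbol\phi\rangle$ for some logical single-qubit unitaries $\mathbf U_k$ (depending on the branch), $|\boldsymbol\phi\rangle$ being the encoded version of $|\phi\rangle$. *)

theory Defs
  imports Complex_Main
begin

text \<open>A single-qubit operator is a 2x2 matrix
  u :: bool => bool => complex with u a b = <a|U|b>.\<close>

type_synonym cfg = "nat \<Rightarrow> bool"
type_synonym qstate = "cfg \<Rightarrow> complex"
type_synonym op1 = "bool \<Rightarrow> bool \<Rightarrow> complex"

definition cfgs :: "nat set \<Rightarrow> cfg set" where
  "cfgs S = {x. \<forall>j. x j \<longrightarrow> j \<in> S}"

definition is_state :: "nat set \<Rightarrow> qstate \<Rightarrow> bool" where
  "is_state S \<psi> \<longleftrightarrow> (\<forall>x. x \<notin> cfgs S \<longrightarrow> \<psi> x = 0)"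

definition qinner :: "nat set \<Rightarrow> qstate \<Rightarrow> qstate \<Rightarrow> complex" where
  "qinner S \<phi> \<psi> = (\<Sum>x\<in>cfgs S. cnj (\<phi> x) * \<psi> x)"

definition normalized_state :: "nat set \<Rightarrow> qstate \<Rightarrow> bool" where
  "normalized_state S \<psi> \<longleftrightarrow> is_state S \<psi> \<and> qinner S \<psi> \<psi> = 1"

definition unitary2 :: "op1 \<Rightarrow> bool" where
  "unitary2 u \<longleftrightarrow> (\<forall>a c. (\<Sum>b\<in>UNIV. cnj (u b a) * u b c) = (if a = c then 1 else 0))"

text \<open>Apply an operator A (matrix indexed by configurations supported on S) to the qubits S.\<close>
definition apply_on :: "nat set \<Rightarrow> (cfg \<Rightarrow> cfg \<Rightarrow> complex) \<Rightarrow> qstate \<Rightarrow> qstate" where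
  "apply_on S A \<psi> = (\<lambda>x. \<Sum>z\<in>cfgs S. A (\<lambda>j. j \<in> S \<and> x j) z * \<psi> (\<lambda>j. if j \<in> S then z j else x j))"

definition apply1 :: "nat \<Rightarrow> op1 \<Rightarrow> qstate \<Rightarrow> qstate" where
  "apply1 j M = apply_on {j} (\<lambda>x z. M (x j) (z j))"

fun apply_locals :: "nat \<Rightarrow> (nat \<Rightarrow> op1) \<Rightarrow> qstate \<Rightarrow> qstate" where
  "apply_locals 0 U \<phi> = \<phi>"
| "apply_locals (Suc k) U \<phi> = apply1 k (U k) (apply_locals k U \<phi>)"

text \<open>Relabel a state on qubits S via the injection pi: qubit j becomes qubit pi j.\<close>
definition relabel :: "(nat \<Rightarrow> nat) \<Rightarrow> nat set \<Rightarrow> qstate \<Rightarrow> qstate" where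
  "relabel \<pi> S \<chi> = (\<lambda>y. if y \<in> cfgs (\<pi> ` S) then \<chi> (\<lambda>j. j \<in> S \<and> y (\<pi> j)) else 0)"

text \<open>The qubits in S are (exactly) in the pure state chi, i.e. the global (unnormalised)
  vector psi is a product of chi on S with some vector on the remaining qubits
  (the scalar/zero case covers branches of probability zero).\<close>
definition in_state :: "nat set \<Rightarrow> qstate \<Rightarrow> qstate \<Rightarrow> bool" where
  "in_state S \<chi> \<psi> \<longleftrightarrow>
     (\<exists>r. \<forall>x. \<psi> x = \<chi> (\<lambda>j. j \<in> S \<and> x j) * r (\<lambda>j. j \<notin> S \<and> x j))"

text \<open>Meas j V f: measure qubit j in the orthonormal basis given by the columns of the
  unitary V (|v_b> has amplitudes V a b); on outcome b continue with f b.\<close>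
datatype mtree = MLeaf | Meas nat op1 "bool \<Rightarrow> mtree"

definition proj_col :: "op1 \<Rightarrow> bool \<Rightarrow> op1" where
  "proj_col V b = (\<lambda>a c. V a b * cnj (V c b))"

primrec mleaves :: "mtree \<Rightarrow> qstate \<Rightarrow> qstate set" where
  "mleaves MLeaf = (\<lambda>\<psi>. {\<psi>})"
| "mleaves (Meas j V f) = (\<lambda>\<psi>. \<Union>b\<in>UNIV. mleaves (f b) (apply1 j (proj_col V b) \<psi>))"

text \<open>valid_mt R M T: T measures only qubits in R, with genuine rank-one single-qubit
  projective measurements, and along every branch every qubit of R gets measured
  (M = qubits measured so far).\<close>
primrec valid_mt_aux :: "mtree \<Rightarrow> nat set \<Rightarrow> nat set \<Rightarrow> bool" where
  "valid_mt_aux MLeaf = (\<lambda>R M. R \<subseteq> M)"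
| "valid_mt_aux (Meas j V f) = (\<lambda>R M. j \<in> R \<and> unitary2 V \<and> (\<forall>b. valid_mt_aux (f b) R (insert j M)))"

definition valid_mt :: "nat set \<Rightarrow> nat set \<Rightarrow> mtree \<Rightarrow> bool" where
  "valid_mt R M T = valid_mt_aux T R M"

text \<open>A family is a set of pairs (N, psi) with psi an N-qubit state on qubits 0..N-1.\<close>
definition universal_LPM :: "(nat \<times> qstate) set \<Rightarrow> bool" where
  "universal_LPM \<Psi> \<longleftrightarrow>
    (\<forall>n \<phi>. normalized_state {..<n} \<phi> \<longrightarrow>
      (\<exists>(N, \<psi>)\<in>\<Psi>. \<exists>pos T.
          inj_on pos {..<n} \<and> pos ` {..<n} \<subseteq> {..<N} \<and>
          valid_mt ({..<N} - pos ` {..<n}) {} T \<and>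
          (\<forall>\<chi>\<in>mleaves T \<psi>. \<exists>U. (\<forall>k<n. unitary2 (U k)) \<and>
              in_state (pos ` {..<n}) (relabel pos {..<n} (apply_locals n U \<phi>)) \<chi>)))"

definition is_encoding :: "nat \<Rightarrow> (bool \<Rightarrow> qstate) \<Rightarrow> bool" where
  "is_encoding m e \<longleftrightarrow> normalized_state {..<m} (e False) \<and> normalized_state {..<m} (e True)
      \<and> qinner {..<m} (e False) (e True) = 0"

definition blockset :: "nat \<Rightarrow> nat \<Rightarrow> nat set" where
  "blockset m k = {k*m ..< k*m + m}"

definition block :: "nat \<Rightarrow> nat \<Rightarrow> cfg \<Rightarrow> cfg" where
  "block m k y = (\<lambda>j. j < m \<and> y (k*m + j))"

definition encode :: "(bool \<Rightarrow> qstate) \<Rightarrow> nat \<Rightarrow> nat \<Rightarrow> qstate \<Rightarrow> qstate" where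
  "encode e m N \<psi> = (\<lambda>y. if y \<in> cfgs {..<N*m}
      then (\<Sum>i\<in>cfgs {..<N}. \<psi> i * (\<Prod>k<N. e (i k) (block m k y))) else 0)"

definition encoded_family :: "(bool \<Rightarrow> qstate) \<Rightarrow> nat \<Rightarrow> (nat \<times> qstate) set \<Rightarrow> (nat \<times> qstate) set" where
  "encoded_family e m \<Psi> = (\<lambda>(N, \<psi>). (N, encode e m N \<psi>)) ` \<Psi>"

definition logical_op :: "(bool \<Rightarrow> qstate) \<Rightarrow> nat \<Rightarrow> nat \<Rightarrow> op1 \<Rightarrow> cfg \<Rightarrow> cfg \<Rightarrow> complex" where
  "logical_op e m k u = (\<lambda>x z. \<Sum>a\<in>UNIV. \<Sum>b\<in>UNIV.
       u a b * e a (block m k x) * cnj (e b (block m k z)))"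

fun apply_logicals :: "(bool \<Rightarrow> qstate) \<Rightarrow> nat \<Rightarrow> nat \<Rightarrow> (nat \<Rightarrow> op1) \<Rightarrow> qstate \<Rightarrow> qstate" where
  "apply_logicals e m 0 U \<phi> = \<phi>"
| "apply_logicals e m (Suc k) U \<phi> =
     apply_on (blockset m k) (logical_op e m k (U k)) (apply_logicals e m k U \<phi>)"

definition blockmap :: "nat \<Rightarrow> (nat \<Rightarrow> nat) \<Rightarrow> nat \<Rightarrow> nat" where
  "blockmap m pos j = pos (j div m) * m + j mod m"

text \<open>Act j Ks f: party j (a single qubit) applies the local quantum instrument with
  (fine-grained) Kraus operators Ks; on outcome i the outcome is broadcast and the
  protocol continues with f i.  Finitely many rounds, arbitrary adaptivity.\<close>
datatype locc = Done | Act nat "op1 list" "nat \<Rightarrow> locc"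

definition kraus_complete :: "op1 list \<Rightarrow> bool" where
  "kraus_complete Ks \<longleftrightarrow>
     (\<forall>a c. (\<Sum>K\<leftarrow>Ks. \<Sum>b\<in>UNIV. cnj (K b a) * K b c) = (if a = c then 1 else 0))"

primrec valid_locc_aux :: "locc \<Rightarrow> nat set \<Rightarrow> bool" where
  "valid_locc_aux Done = (\<lambda>Q. True)"
| "valid_locc_aux (Act j Ks f) = (\<lambda>Q.
     j \<in> Q \<and> kraus_complete Ks \<and> (\<forall>i<length Ks. valid_locc_aux (f i) Q))"

definition valid_locc :: "nat set \<Rightarrow> locc \<Rightarrow> bool" where
  "valid_locc Q P = valid_locc_aux P Q"

primrec lleaves :: "locc \<Rightarrow> qstate \<Rightarrow> qstate set" where
  "lleaves Done = (\<lambda>\<psi>. {\<psi>})"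
| "lleaves (Act j Ks f) = (\<lambda>\<psi>. \<Union>i<length Ks. lleaves (f i) (apply1 j (Ks ! i) \<psi>))"

definition encoded_universal_LOCC ::
  "(bool \<Rightarrow> qstate) \<Rightarrow> nat \<Rightarrow> (nat \<times> qstate) set \<Rightarrow> bool" where
  "encoded_universal_LOCC e m \<Psi>enc \<longleftrightarrow>
    (\<forall>n \<phi>. normalized_state {..<n} \<phi> \<longrightarrow>
      (\<exists>(N, \<psi>)\<in>\<Psi>enc. \<exists>pos P.
          inj_on pos {..<n} \<and> pos ` {..<n} \<subseteq> {..<N} \<and>
          valid_locc {..<N*m} P \<and>
          (\<forall>\<chi>\<in>lleaves P \<psi>. \<exists>U. (\<forall>k<n. unitary2 (U k)) \<and>
              in_state (\<Union>k\<in>pos ` {..<n}. blockset m k)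
                (relabel (blockmap m pos) {..<n*m} (apply_logicals e m n U (encode e m n \<phi>))) \<chi>)))"

end

theory Submission
  imports Defs
begin

lemma finite_cfgs: "finite S \<Longrightarrow> finite (cfgs S)"
proof -
  assume "finite S"
  have "cfgs S = (\<lambda>A j. j \<in> A) ` Pow S"
    unfolding cfgs_def
  proof (auto)
    fix x :: cfg assume h: "\<forall>j. x j \<longrightarrow> j \<in> S"
    show "x \<in> (\<lambda>A j. j \<in> A) ` Pow S"
      by (rule image_eqI[of _ _ "{j. x j}"]) (use h in auto)
  qed
  thus ?thesis using \<open>finite S\<close> by simp
qed

lemma cfgs_empty: "cfgs {} = {\<lambda>_. False}"
  unfolding cfgs_def by auto

lemma cfgs_insert_sum:
  assumes "finite B" "q \<notin> B"
  shows "sum F (cfgs (insert q B)) = (\<Sum>y\<in>cfgs B. F (y(q:=False)) + F (y(q:=True)))"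
proof -
  have eq: "cfgs (insert q B) = (\<lambda>y. y(q:=False)) ` cfgs B \<union> (\<lambda>y. y(q:=True)) ` cfgs B"
  proof (auto simp: cfgs_def)
    fix x :: cfg assume h: "\<forall>j. x j \<longrightarrow> j = q \<or> j \<in> B"
      and n: "x \<notin> (\<lambda>y. y(q := True)) ` {x. \<forall>j. x j \<longrightarrow> j \<in> B}"
    show "x \<in> (\<lambda>y. y(q := False)) ` {x. \<forall>j. x j \<longrightarrow> j \<in> B}"
    proof (cases "x q")
      case True
      have "x = (x(q:=False))(q:=True)" using True by (auto simp: fun_eq_iff)
      moreover have "x(q:=False) \<in> {x. \<forall>j. x j \<longrightarrow> j \<in> B}" using h by auto
      ultimately show ?thesis using n by blast
    next
      case False
      have "x = (x(q:=False))(q:=False)" using False by (auto simp: fun_eq_iff)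
      moreover have "x(q:=False) \<in> {x. \<forall>j. x j \<longrightarrow> j \<in> B}" using h by auto
      ultimately show ?thesis by blast
    qed
  next
    fix j xa assume "if j = q then False else xa j" "\<forall>j. xa j \<longrightarrow> j \<in> B" "j \<notin> B"
    thus "j = q" by (cases "j = q") auto
  next
    fix j xa assume "if j = q then True else xa j" "\<forall>j. xa j \<longrightarrow> j \<in> B" "j \<notin> B"
    thus "j = q" by (cases "j = q") auto
  qed
  have q0: "\<And>y. y \<in> cfgs B \<Longrightarrow> y q = False" using assms(2) by (auto simp: cfgs_def)
  have inj: "inj_on (\<lambda>y. y(q:=a)) (cfgs B)" for a
  proof (rule inj_onI)
    fix x y assume x: "x \<in> cfgs B" and y: "y \<in> cfgs B" and h: "x(q:=a) = y(q:=a)"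
    show "x = y"
    proof (rule ext)
      fix j show "x j = y j"
      proof (cases "j = q")
        case True thus ?thesis using q0[OF x] q0[OF y] by simp
      next
        case False thus ?thesis using fun_cong[OF h, of j] by simp
      qed
    qed
  qed
  note inj0 = inj[of False] and inj1 = inj[of True]
  have disj: "(\<lambda>y. y(q:=False)) ` cfgs B \<inter> (\<lambda>y. y(q:=True)) ` cfgs B = {}"
  proof (rule equals0I)
    fix x assume "x \<in> (\<lambda>y. y(q:=False)) ` cfgs B \<inter> (\<lambda>y. y(q:=True)) ` cfgs B"
    then obtain y1 y2 where "x = y1(q:=False)" "x = y2(q:=True)" by blast
    hence "x q = False" "x q = True" by (metis fun_upd_same)+
    thus False by simp
  qed
  have "sum F (cfgs (insert q B)) = sum F ((\<lambda>y. y(q:=False)) ` cfgs B) + sum F ((\<lambda>y. y(q:=True)) ` cfgs B)"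
    unfolding eq by (rule sum.union_disjoint) (use assms finite_cfgs disj in auto)
  also have "\<dots> = (\<Sum>y\<in>cfgs B. F (y(q:=False))) + (\<Sum>y\<in>cfgs B. F (y(q:=True)))"
    by (simp only: sum.reindex[OF inj0] sum.reindex[OF inj1] comp_def)
  finally show ?thesis by (simp add: sum.distrib)
qed

lemma sum_bool: "(\<Sum>a\<in>UNIV. f a) = f False + (f True :: 'a::comm_monoid_add)"
  by (simp add: UNIV_bool add.commute)

lemma apply1_eq: "apply1 j K \<phi> x = (\<Sum>a\<in>UNIV. K (x j) a * \<phi> (x(j:=a)))"
proof -
  have "apply1 j K \<phi> x = (\<Sum>z\<in>cfgs (insert j {}). K (x j) (z j) * \<phi> (\<lambda>i. if i \<in> {j} then z i else x i))"
    unfolding apply1_def apply_on_def by simp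
  also have "\<dots> = K (x j) False * \<phi> (x(j:=False)) + K (x j) True * \<phi> (x(j:=True))"
    by (subst cfgs_insert_sum) (auto simp: cfgs_empty fun_upd_def)
  finally show ?thesis by (simp add: sum_bool)
qed

lemma apply_on_add: "apply_on J A (\<lambda>x. \<phi> x + \<psi> x) = (\<lambda>x. apply_on J A \<phi> x + apply_on J A \<psi> x)"
  unfolding apply_on_def by (simp add: distrib_left sum.distrib)

lemma apply_on_scale: "apply_on J (\<lambda>x z. c * A x z) \<phi> = (\<lambda>x. c * apply_on J A \<phi> x)"
  unfolding apply_on_def by (simp add: sum_distrib_left mult.assoc)

lemma in_state_apply_on:
  assumes "in_state S \<chi> \<phi>" "J \<inter> S = {}"
  shows "in_state S \<chi> (apply_on J A \<phi>)"
proof -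
  obtain r where r: "\<And>x. \<phi> x = \<chi> (\<lambda>j. j \<in> S \<and> x j) * r (\<lambda>j. j \<notin> S \<and> x j)"
    using assms(1) unfolding in_state_def by blast
  define r' where "r' = (\<lambda>y. \<Sum>z\<in>cfgs J. A (\<lambda>j. j \<in> J \<and> y j) z * r (\<lambda>j. j \<notin> S \<and> (if j \<in> J then z j else y j)))"
  have "apply_on J A \<phi> x = \<chi> (\<lambda>j. j \<in> S \<and> x j) * r' (\<lambda>j. j \<notin> S \<and> x j)" for x
  proof -
    have e1: "(\<lambda>j. j \<in> S \<and> (if j \<in> J then z j else x j)) = (\<lambda>j. j \<in> S \<and> x j)" for z
      using assms(2) by (auto simp: fun_eq_iff)
    have e2: "(\<lambda>j. j \<in> J \<and> j \<notin> S \<and> x j) = (\<lambda>j. j \<in> J \<and> x j)"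
      using assms(2) by (auto simp: fun_eq_iff)
    have e3: "(\<lambda>j. j \<notin> S \<and> (if j \<in> J then z j else j \<notin> S \<and> x j)) = (\<lambda>j. j \<notin> S \<and> (if j \<in> J then z j else x j))" for z
      by (auto simp: fun_eq_iff)
    show ?thesis unfolding apply_on_def r r'_def
      by (simp add: e1 e2 e3 sum_distrib_left mult.left_commute)
  qed
  thus ?thesis unfolding in_state_def by blast
qed

lemma in_state_product:
  "in_state B f (apply_on B (\<lambda>x z. f x * g z) \<phi>)"
proof -
  define r where "r = (\<lambda>y. \<Sum>z\<in>cfgs B. g z * \<phi> (\<lambda>j. if j \<in> B then z j else y j))"
  have "apply_on B (\<lambda>x z. f x * g z) \<phi> x = f (\<lambda>j. j \<in> B \<and> x j) * r (\<lambda>j. j \<notin> B \<and> x j)" for x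
  proof -
    have e: "(\<lambda>j. if j \<in> B then z j else j \<notin> B \<and> x j) = (\<lambda>j. if j \<in> B then z j else x j)" for z
      by (auto simp: fun_eq_iff)
    show ?thesis unfolding apply_on_def r_def by (simp add: e sum_distrib_left mult.assoc)
  qed
  thus ?thesis unfolding in_state_def by blast
qed

fun run :: "(nat set \<times> (cfg \<Rightarrow> cfg \<Rightarrow> complex)) list \<Rightarrow> qstate \<Rightarrow> qstate" where
  "run [] \<phi> = \<phi>"
| "run ((J, A) # ops) \<phi> = apply_on J A (run ops \<phi>)"

lemma run_append: "run (ops1 @ ops2) \<phi> = run ops1 (run ops2 \<phi>)"
  by (induction ops1) auto

lemma run_add: "run ops (\<lambda>x. \<phi> x + \<psi> x) = (\<lambda>x. run ops \<phi> x + run ops \<psi> x)"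
  by (induction ops) (auto simp: apply_on_add)

lemma in_state_run: "in_state S \<chi> \<phi> \<Longrightarrow> (\<forall>(J, A)\<in>set ops. J \<inter> S = {}) \<Longrightarrow> in_state S \<chi> (run ops \<phi>)"
  by (induction ops) (auto intro: in_state_apply_on)

definition opmul :: "op1 \<Rightarrow> op1 \<Rightarrow> op1" where
  "opmul A B = (\<lambda>a c. \<Sum>b\<in>UNIV. A a b * B b c)"

lemma apply1_apply1: "apply1 j A (apply1 j B \<phi>) = apply1 j (opmul A B) \<phi>"
  by (rule ext) (simp add: apply1_eq opmul_def sum_bool algebra_simps)

lemma apply1_id: "apply1 j (\<lambda>a c. if a = c then 1 else 0) \<phi> = \<phi>"
proof (rule ext)
  fix x show "apply1 j (\<lambda>a c. if a = c then 1 else 0) \<phi> x = \<phi> x"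
    by (cases "x j") (simp_all add: apply1_eq sum_bool fun_upd_idem)
qed

lemma apply1_opadd: "apply1 j (\<lambda>a c. A a c + B a c) \<phi> = (\<lambda>x. apply1 j A \<phi> x + apply1 j B \<phi> x)"
  by (rule ext) (simp add: apply1_eq sum_bool algebra_simps)

lemma apply1_opscale: "apply1 j (\<lambda>a c. k * A a c) \<phi> = (\<lambda>x. k * apply1 j A \<phi> x)"
  by (rule ext) (simp add: apply1_eq sum_bool algebra_simps)

lemma apply1_commute: "i \<noteq> j \<Longrightarrow> apply1 i A (apply1 j B \<phi>) = apply1 j B (apply1 i A \<phi>)"
  by (rule ext) (simp add: apply1_eq sum_bool algebra_simps fun_upd_twist)


lemma unitary2_rows:
  assumes "unitary2 V"
  shows "(\<Sum>b\<in>UNIV. V a b * cnj (V c b)) = (if a = c then 1 else 0)"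
proof -
  define p where "p = V False False" define q where "q = V False True"
  define r where "r = V True False" define s where "s = V True True"
  have h1: "cnj p * p + cnj r * r = 1" using assms unfolding unitary2_def
    by (auto simp: sum_bool p_def r_def dest: spec[of _ False])
  have h2: "cnj q * q + cnj s * s = 1" using assms unfolding unitary2_def
    by (auto simp: sum_bool q_def s_def dest: spec[of _ True])
  have h3: "cnj p * q + cnj r * s = 0" using assms unfolding unitary2_def
    by (auto simp: sum_bool p_def q_def r_def s_def dest: spec[of _ False])
  define d where "d = p * s - q * r"
  have hq: "q = - cnj r * d" unfolding d_def using h1 h3 by algebra
  have hs: "s = cnj p * d" unfolding d_def using h1 h3 by algebra
  have cq: "cnj q = - r * cnj d" using arg_cong[OF hq, of cnj] by simp
  have cs: "cnj s = p * cnj d" using arg_cong[OF hs, of cnj] by simp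
  have hd: "d * cnj d = 1"
  proof -
    have "cnj q * q + cnj s * s = (- r * cnj d) * (- cnj r * d) + (p * cnj d) * (cnj p * d)"
      using hq hs cq cs by simp
    also have "\<dots> = d * cnj d * (cnj p * p + cnj r * r)" by (simp add: algebra_simps)
    finally have "cnj q * q + cnj s * s = d * cnj d * (cnj p * p + cnj r * r)" .
    thus ?thesis using h1 h2 by simp
  qed
  have r1: "p * cnj p + q * cnj q = 1"
  proof -
    have "q * cnj q = r * cnj r * (d * cnj d)" unfolding cq by (subst hq) (simp add: algebra_simps)
    thus ?thesis using h1 hd by (simp add: algebra_simps)
  qed
  have r2: "r * cnj r + s * cnj s = 1"
  proof -
    have "s * cnj s = p * cnj p * (d * cnj d)" unfolding cs by (subst hs) (simp add: algebra_simps)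
    thus ?thesis using h1 hd by (simp add: algebra_simps)
  qed
  have r3: "p * cnj r + q * cnj s = 0"
  proof -
    have "q * cnj s = - p * cnj r * (d * cnj d)" unfolding cs by (subst hq) (simp add: algebra_simps)
    thus ?thesis using hd by simp
  qed
  have r4: "r * cnj p + s * cnj q = 0" using arg_cong[OF r3, of cnj] by (simp add: algebra_simps)
  show ?thesis
    using r1 r2 r3 r4 by (cases a; cases c) (simp_all add: sum_bool p_def q_def r_def s_def)
qed


lemma real_dep3:
  fixes a1 a2 a3 :: complex
  shows "\<exists>z x y :: real. (z \<noteq> 0 \<or> x \<noteq> 0 \<or> y \<noteq> 0) \<and> of_real z * a1 + of_real x * a2 + of_real y * a3 = 0"
proof -
  define n1 where "n1 = Im (cnj a2 * a3)"
  define n2 where "n2 = Im (cnj a3 * a1)"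
  define n3 where "n3 = Im (cnj a1 * a2)"
  have id: "of_real n1 * a1 + of_real n2 * a2 + of_real n3 * a3 = 0"
    unfolding n1_def n2_def n3_def by (simp add: complex_eq_iff algebra_simps)
  show ?thesis
  proof (cases "n1 \<noteq> 0 \<or> n2 \<noteq> 0 \<or> n3 \<noteq> 0")
    case True thus ?thesis using id by blast
  next
    case False
    hence n3: "n3 = 0" by simp
    show ?thesis
    proof (cases "a1 = 0")
      case True thus ?thesis by (intro exI[of _ 1] exI[of _ 0]) simp
    next
      case a1: False
      have "Im (a2 / a1) = 0"
      proof -
        have nn: "of_real ((cmod a1)^2) = a1 * cnj a1" by (rule complex_norm_square)
        have "a2 / a1 = cnj a1 * a2 / of_real ((cmod a1)^2)"
          unfolding nn using a1 by (simp add: field_simps)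
        hence "Im (a2 / a1) = Im (cnj a1 * a2) / (cmod a1)^2"
          by (simp add: Im_divide_of_real)
        thus ?thesis using n3 n3_def by simp
      qed
      hence "a2 / a1 = of_real (Re (a2 / a1))" by (simp add: complex_eq_iff)
      hence "of_real (Re (a2 / a1)) * a1 = a2" using a1 by (metis nonzero_divide_eq_eq)
      thus ?thesis by (intro exI[of _ "Re (a2 / a1)"] exI[of _ "-1"] exI[of _ 0]) simp
    qed
  qed
qed

lemma exists_u:
  fixes A B C :: complex
  shows "\<exists>u0 u1. cnj u0 * u0 + cnj u1 * u1 = 1 \<and>
     (u0 * cnj u0 - u1 * cnj u1) * A + u0 * cnj u1 * B + u1 * cnj u0 * C = 0"
proof -
  obtain z x y :: real where nz: "z \<noteq> 0 \<or> x \<noteq> 0 \<or> y \<noteq> 0"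
    and eq: "of_real z * A + of_real x * ((B + C) / 2) + of_real y * (\<i> * (B - C) / 2) = 0"
    using real_dep3 by blast
  define t where "t = sqrt (z^2 + x^2 + y^2)"
  have tpos: "t > 0" unfolding t_def using nz by (auto intro: add_pos_nonneg add_nonneg_pos simp: sum_power2_gt_zero_iff)
  define z' where "z' = z / t" define x' where "x' = x / t" define y' where "y' = y / t"
  have unit: "z'^2 + x'^2 + y'^2 = 1"
  proof -
    have "t^2 = z^2 + x^2 + y^2" unfolding t_def by (simp add: add_nonneg_nonneg)
    have "z'^2 + x'^2 + y'^2 = (z^2 + x^2 + y^2) / t^2"
      unfolding z'_def x'_def y'_def by (simp add: power_divide add_divide_distrib)
    moreover have "z^2 + x^2 + y^2 > 0" using tpos \<open>t^2 = _\<close> by (metis zero_less_power)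
    ultimately show ?thesis using \<open>t^2 = _\<close> by simp
  qed
  have eq': "of_real z' * A + of_real x' * ((B + C) / 2) + of_real y' * (\<i> * (B - C) / 2) = 0"
  proof -
    have "of_real z' * A + of_real x' * ((B + C) / 2) + of_real y' * (\<i> * (B - C) / 2)
       = (of_real z * A + of_real x * ((B + C) / 2) + of_real y * (\<i> * (B - C) / 2)) / of_real t"
      using tpos unfolding z'_def x'_def y'_def by (simp add: field_simps)
    thus ?thesis using eq by simp
  qed
  have zle: "-1 \<le> z'" "z' \<le> 1"
  proof -
    have "z'^2 \<le> 1" using unit zero_le_power2[of x'] zero_le_power2[of y'] by linarith
    hence "\<bar>z'\<bar> \<le> 1" by (simp add: abs_square_le_1)
    thus "-1 \<le> z'" "z' \<le> 1" by linarith+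
  qed
  show ?thesis
  proof (cases "z' = -1")
    case True
    hence "x' = 0" "y' = 0" using unit by (simp_all add: add_nonneg_eq_0_iff)
    thus ?thesis using eq' True by (intro exI[of _ 0] exI[of _ 1]) simp
  next
    case False
    define r where "r = sqrt ((1 + z') / 2)"
    have rpos: "r > 0" unfolding r_def using False zle by simp
    have r2: "r^2 = (1 + z') / 2" unfolding r_def using zle by simp
    define u0 where "u0 = complex_of_real r"
    define u1 where "u1 = Complex x' (- y') / of_real (2 * r)"
    have n0: "cnj u0 * u0 = of_real ((1 + z') / 2)"
    proof -
      have "cnj u0 * u0 = of_real (r^2)" unfolding u0_def by (simp add: power2_eq_square)
      thus ?thesis using r2 by simp
    qed
    have n1: "cnj u1 * u1 = of_real ((x'^2 + y'^2) / (4 * r^2))"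
      unfolding u1_def using rpos by (simp add: complex_eq_iff power2_eq_square field_simps)
    have xy: "x'^2 + y'^2 = 1 - z'^2" using unit by simp
    have n1': "cnj u1 * u1 = of_real ((1 - z') / 2)"
    proof -
      have E: "(x'^2 + y'^2) / (4 * r^2) = (1 - z') / 2"
      proof -
        have nz: "1 + z' \<noteq> 0" using False by linarith
        have "1 - z'^2 = (1 - z') * (1 + z')" by (simp add: algebra_simps power2_eq_square)
        hence "(1 - z'^2) / (4 * ((1 + z') / 2)) = (1 - z') / 2" using nz by (simp add: field_simps)
        thus ?thesis unfolding xy r2 .
      qed
      show ?thesis by (simp only: n1 E)
    qed
    have w: "u0 * cnj u1 = Complex (x' / 2) (y' / 2)"
      unfolding u0_def u1_def using rpos by (simp add: complex_eq_iff field_simps)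
    have w': "u1 * cnj u0 = Complex (x' / 2) (- y' / 2)"
      unfolding u0_def u1_def using rpos by (simp add: complex_eq_iff field_simps)
    have d: "u0 * cnj u0 - u1 * cnj u1 = of_real z'"
    proof -
      have a: "u0 * cnj u0 = of_real ((1 + z') / 2)" using n0 by (simp add: mult.commute)
      have b: "u1 * cnj u1 = of_real ((1 - z') / 2)" using n1' by (simp add: mult.commute)
      have c: "(1 + z') / 2 - (1 - z') / 2 = z'" by (simp add: field_simps)
      show ?thesis unfolding a b of_real_diff[symmetric] c ..
    qed
    show ?thesis
    proof (intro exI conjI)
      have c: "(1 + z') / 2 + (1 - z') / 2 = 1" by (simp add: field_simps)
      show "cnj u0 * u0 + cnj u1 * u1 = 1" unfolding n0 n1' of_real_add[symmetric] c by simp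
      show "(u0 * cnj u0 - u1 * cnj u1) * A + u0 * cnj u1 * B + u1 * cnj u0 * C = 0"
        unfolding d w w' using eq' apply (simp add: complex_eq_iff algebra_simps)
        apply (elim conjE, intro conjI) by algebra+
    qed
  qed
qed


lemma apply1_add: "apply1 j K (\<lambda>x. \<phi> x + \<psi> x) = (\<lambda>x. apply1 j K \<phi> x + apply1 j K \<psi> x)"
  unfolding apply1_def by (rule apply_on_add)

lemma in_state_measure:
  assumes "q \<notin> B'" "in_state (insert q B') v \<phi>"
  shows "in_state B' (\<lambda>y. \<Sum>a\<in>UNIV. cnj (u a) * v (y(q:=a))) (apply1 q (\<lambda>a c. u a * cnj (u c)) \<phi>)"
proof -
  obtain r where r: "\<And>x. \<phi> x = v (\<lambda>j. j \<in> insert q B' \<and> x j) * r (\<lambda>j. j \<notin> insert q B' \<and> x j)"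
    using assms(2) unfolding in_state_def by blast
  define r' where "r' = (\<lambda>w. u (w q) * r (\<lambda>j. j \<notin> insert q B' \<and> w j))"
  have "apply1 q (\<lambda>a c. u a * cnj (u c)) \<phi> x =
      (\<Sum>a\<in>UNIV. cnj (u a) * v ((\<lambda>j. j \<in> B' \<and> x j)(q:=a))) * r' (\<lambda>j. j \<notin> B' \<and> x j)" for x
  proof -
    have e1: "(\<lambda>j. j \<in> insert q B' \<and> (x(q:=a)) j) = (\<lambda>j. j \<in> B' \<and> x j)(q:=a)" for a
      using assms(1) by (auto simp: fun_eq_iff)
    have e2: "(\<lambda>j. j \<notin> insert q B' \<and> (x(q:=a)) j) = (\<lambda>j. j \<notin> insert q B' \<and> x j)" for a
      by (auto simp: fun_eq_iff)
    have e3: "(\<lambda>j. j \<notin> insert q B' \<and> j \<notin> B' \<and> x j) = (\<lambda>j. j \<notin> insert q B' \<and> x j)"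
      by (auto simp: fun_eq_iff)
    have "apply1 q (\<lambda>a c. u a * cnj (u c)) \<phi> x = (\<Sum>a\<in>UNIV. u (x q) * cnj (u a) *
       (v (\<lambda>j. j \<in> insert q B' \<and> (x(q:=a)) j) * r (\<lambda>j. j \<notin> insert q B' \<and> (x(q:=a)) j)))"
      by (simp only: apply1_eq r)
    also have "\<dots> = (\<Sum>a\<in>UNIV. u (x q) * cnj (u a) *
       (v ((\<lambda>j. j \<in> B' \<and> x j)(q:=a)) * r (\<lambda>j. j \<notin> insert q B' \<and> x j)))"
      by (simp only: e1 e2)
    also have "\<dots> = (\<Sum>a\<in>UNIV. cnj (u a) * v ((\<lambda>j. j \<in> B' \<and> x j)(q:=a))) * r' (\<lambda>j. j \<notin> B' \<and> x j)"
      unfolding r'_def using assms(1) by (simp add: e3 sum_bool algebra_simps)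
    finally show ?thesis .
  qed
  thus ?thesis unfolding in_state_def by blast
qed

lemma in_state_empty_zero:
  assumes "in_state {} v \<phi>" "v (\<lambda>_. False) = 0"
  shows "\<phi> x = 0"
  using assms unfolding in_state_def by auto

lemma walgate:
  assumes "finite B"
  shows "B \<subseteq> Q \<Longrightarrow> qinner B v0 v1 = 0 \<Longrightarrow> (\<forall>b. valid_locc_aux (Pc b) Q) \<Longrightarrow>
    \<exists>P. valid_locc_aux P Q \<and> (\<forall>\<phi>0 \<phi>1 lf. in_state B v0 \<phi>0 \<longrightarrow> in_state B v1 \<phi>1 \<longrightarrow>
        lf \<in> lleaves P (\<lambda>x. \<phi>0 x + \<phi>1 x) \<longrightarrow>
        (\<exists>b ops. (\<forall>(J, A)\<in>set ops. J \<subseteq> B) \<and> lf \<in> lleaves (Pc b) (run ops (if b then \<phi>1 else \<phi>0))))"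
  using assms
proof (induction B arbitrary: v0 v1 rule: finite_induct)
  case empty
  have "cnj (v0 (\<lambda>_. False)) * v1 (\<lambda>_. False) = 0"
    using empty.prems(2) unfolding qinner_def cfgs_empty by simp
  hence "v0 (\<lambda>_. False) = 0 \<or> v1 (\<lambda>_. False) = 0" by simp
  thus ?case
  proof
    assume z: "v0 (\<lambda>_. False) = 0"
    show ?thesis
    proof (intro exI[of _ "Pc True"] conjI allI impI)
      show "valid_locc_aux (Pc True) Q" using empty.prems by simp
      fix \<phi>0 \<phi>1 lf assume h: "in_state {} v0 \<phi>0" "in_state {} v1 \<phi>1" "lf \<in> lleaves (Pc True) (\<lambda>x. \<phi>0 x + \<phi>1 x)"
      have "(\<lambda>x. \<phi>0 x + \<phi>1 x) = \<phi>1" using in_state_empty_zero[OF h(1) z] by simp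
      thus "\<exists>b ops. (\<forall>(J, A)\<in>set ops. J \<subseteq> {}) \<and> lf \<in> lleaves (Pc b) (run ops (if b then \<phi>1 else \<phi>0))"
        using h(3) by (intro exI[of _ True] exI[of _ "[]"]) simp
    qed
  next
    assume z: "v1 (\<lambda>_. False) = 0"
    show ?thesis
    proof (intro exI[of _ "Pc False"] conjI allI impI)
      show "valid_locc_aux (Pc False) Q" using empty.prems by simp
      fix \<phi>0 \<phi>1 lf assume h: "in_state {} v0 \<phi>0" "in_state {} v1 \<phi>1" "lf \<in> lleaves (Pc False) (\<lambda>x. \<phi>0 x + \<phi>1 x)"
      have "(\<lambda>x. \<phi>0 x + \<phi>1 x) = \<phi>0" using in_state_empty_zero[OF h(2) z] by simp
      thus "\<exists>b ops. (\<forall>(J, A)\<in>set ops. J \<subseteq> {}) \<and> lf \<in> lleaves (Pc b) (run ops (if b then \<phi>1 else \<phi>0))"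
        using h(3) by (intro exI[of _ False] exI[of _ "[]"]) simp
    qed
  qed
next
  case (insert q B')
  define M where "M = (\<lambda>a c. \<Sum>y\<in>cfgs B'. cnj (v0 (y(q:=a))) * v1 (y(q:=c)))"
  have tr: "M False False + M True True = 0"
    using insert.prems(2) insert.hyps unfolding qinner_def M_def
    by (simp add: cfgs_insert_sum sum.distrib)
  obtain u0 u1 where un: "cnj u0 * u0 + cnj u1 * u1 = 1"
    and fu: "(u0 * cnj u0 - u1 * cnj u1) * M False False + u0 * cnj u1 * M False True + u1 * cnj u0 * M True False = 0"
    using exists_u by blast
  define u where "u = (\<lambda>a. if a then u1 else u0)"
  define w where "w = (\<lambda>a. if a then cnj u0 else - cnj u1)"
  define Ku where "Ku = (\<lambda>a c. u a * cnj (u c))"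
  define Kw where "Kw = (\<lambda>a c. w a * cnj (w c))"
  define vu0 where "vu0 = (\<lambda>y. \<Sum>a\<in>UNIV. cnj (u a) * v0 (y(q:=a)))"
  define vu1 where "vu1 = (\<lambda>y. \<Sum>a\<in>UNIV. cnj (u a) * v1 (y(q:=a)))"
  define vw0 where "vw0 = (\<lambda>y. \<Sum>a\<in>UNIV. cnj (w a) * v0 (y(q:=a)))"
  define vw1 where "vw1 = (\<lambda>y. \<Sum>a\<in>UNIV. cnj (w a) * v1 (y(q:=a)))"
  have gen: "qinner B' (\<lambda>y. \<Sum>a\<in>UNIV. cnj (t a) * v0 (y(q:=a))) (\<lambda>y. \<Sum>a\<in>UNIV. cnj (t a) * v1 (y(q:=a)))
      = t False * cnj (t False) * M False False + t False * cnj (t True) * M False True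
        + t True * cnj (t False) * M True False + t True * cnj (t True) * M True True" for t
    unfolding qinner_def M_def by (simp add: sum_bool algebra_simps sum.distrib sum_distrib_left)
  have ou: "qinner B' vu0 vu1 = 0"
  proof -
    have "qinner B' vu0 vu1 = u0 * cnj u0 * M False False + u0 * cnj u1 * M False True
        + u1 * cnj u0 * M True False + u1 * cnj u1 * M True True"
      unfolding vu0_def vu1_def gen by (simp add: u_def)
    also have "\<dots> = 0" using fu tr by algebra
    finally show ?thesis .
  qed
  have ow: "qinner B' vw0 vw1 = 0"
  proof -
    have "qinner B' vw0 vw1 = cnj u1 * u1 * M False False - cnj u1 * u0 * M False True
        - cnj u0 * u1 * M True False + cnj u0 * u0 * M True True"
      unfolding vw0_def vw1_def gen by (simp add: w_def)
    also have "\<dots> = 0" using fu tr by algebra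
    finally show ?thesis .
  qed
  have sub: "B' \<subseteq> Q" "q \<in> Q" using insert.prems(1) by auto
  obtain Pu where Pu: "valid_locc_aux Pu Q" and Pu2: "\<forall>\<phi>0 \<phi>1 lf. in_state B' vu0 \<phi>0 \<longrightarrow> in_state B' vu1 \<phi>1 \<longrightarrow>
        lf \<in> lleaves Pu (\<lambda>x. \<phi>0 x + \<phi>1 x) \<longrightarrow>
        (\<exists>b ops. (\<forall>(J, A)\<in>set ops. J \<subseteq> B') \<and> lf \<in> lleaves (Pc b) (run ops (if b then \<phi>1 else \<phi>0)))"
    using insert.IH[OF sub(1) ou insert.prems(3)] insert.hyps by blast
  obtain Pw where Pw: "valid_locc_aux Pw Q" and Pw2: "\<forall>\<phi>0 \<phi>1 lf. in_state B' vw0 \<phi>0 \<longrightarrow> in_state B' vw1 \<phi>1 \<longrightarrow>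
        lf \<in> lleaves Pw (\<lambda>x. \<phi>0 x + \<phi>1 x) \<longrightarrow>
        (\<exists>b ops. (\<forall>(J, A)\<in>set ops. J \<subseteq> B') \<and> lf \<in> lleaves (Pc b) (run ops (if b then \<phi>1 else \<phi>0)))"
    using insert.IH[OF sub(1) ow insert.prems(3)] insert.hyps by blast
  have kc: "kraus_complete [Ku, Kw]"
    unfolding kraus_complete_def
  proof (intro allI)
    fix a c
    have n: "cnj u0 * u0 + cnj u1 * u1 = 1" by (rule un)
    show "(\<Sum>K\<leftarrow>[Ku, Kw]. \<Sum>b\<in>UNIV. cnj (K b a) * K b c) = (if a = c then 1 else 0)"
    proof -
      have "(\<Sum>K\<leftarrow>[Ku, Kw]. \<Sum>b\<in>UNIV. cnj (K b a) * K b c) = u c * cnj (u a) * (cnj u0 * u0 + cnj u1 * u1) + w c * cnj (w a) * (cnj u0 * u0 + cnj u1 * u1)"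
        unfolding Ku_def Kw_def by (simp add: sum_bool u_def w_def algebra_simps)
      also have "\<dots> = u c * cnj (u a) + w c * cnj (w a)" using n by simp
      also have "\<dots> = (if a = c then 1 else 0)"
        using n by (cases a; cases c) (simp_all add: u_def w_def algebra_simps)
      finally show ?thesis .
    qed
  qed
  define P where "P = Act q [Ku, Kw] (\<lambda>i. if i = 0 then Pu else Pw)"
  show ?case
  proof (intro exI[of _ P] conjI allI impI)
    show "valid_locc_aux P Q" unfolding P_def using sub kc Pu Pw by auto
    fix \<phi>0 \<phi>1 lf assume h0: "in_state (insert q B') v0 \<phi>0" and h1: "in_state (insert q B') v1 \<phi>1"
      and hl: "lf \<in> lleaves P (\<lambda>x. \<phi>0 x + \<phi>1 x)"
    from hl have "\<exists>i\<in>{..<length [Ku, Kw]}. lf \<in> lleaves ((\<lambda>i. if i = 0 then Pu else Pw) i) (apply1 q ([Ku, Kw] ! i) (\<lambda>x. \<phi>0 x + \<phi>1 x))"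
      unfolding P_def lleaves.simps UN_iff .
    then obtain i where i: "i < 2" and hi: "lf \<in> lleaves (if i = 0 then Pu else Pw) (apply1 q ([Ku, Kw] ! i) (\<lambda>x. \<phi>0 x + \<phi>1 x))"
      by (metis lessThan_iff length_Cons list.size(3) numeral_2_eq_2)
    show "\<exists>b ops. (\<forall>(J, A)\<in>set ops. J \<subseteq> insert q B') \<and> lf \<in> lleaves (Pc b) (run ops (if b then \<phi>1 else \<phi>0))"
    proof (cases "i = 0")
      case True
      have s0: "in_state B' vu0 (apply1 q Ku \<phi>0)" unfolding vu0_def Ku_def by (rule in_state_measure[OF insert.hyps(2) h0])
      have s1: "in_state B' vu1 (apply1 q Ku \<phi>1)" unfolding vu1_def Ku_def by (rule in_state_measure[OF insert.hyps(2) h1])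
      have "lf \<in> lleaves Pu (\<lambda>x. apply1 q Ku \<phi>0 x + apply1 q Ku \<phi>1 x)"
        using hi True by (simp add: apply1_add)
      then obtain b ops where o1: "\<forall>(J, A)\<in>set ops. J \<subseteq> B'" and o2: "lf \<in> lleaves (Pc b) (run ops (if b then apply1 q Ku \<phi>1 else apply1 q Ku \<phi>0))"
        using Pu2 s0 s1 by blast
      show ?thesis
      proof (intro exI[of _ b] exI[of _ "ops @ [({q}, \<lambda>x z. Ku (x q) (z q))]"] conjI)
        show "\<forall>(J, A)\<in>set (ops @ [({q}, \<lambda>x z. Ku (x q) (z q))]). J \<subseteq> insert q B'" using o1 by auto
        show "lf \<in> lleaves (Pc b) (run (ops @ [({q}, \<lambda>x z. Ku (x q) (z q))]) (if b then \<phi>1 else \<phi>0))"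
          using o2 by (cases b) (simp_all add: run_append apply1_def)
      qed
    next
      case False
      hence i1: "i = 1" using i by simp
      have s0: "in_state B' vw0 (apply1 q Kw \<phi>0)" unfolding vw0_def Kw_def by (rule in_state_measure[OF insert.hyps(2) h0])
      have s1: "in_state B' vw1 (apply1 q Kw \<phi>1)" unfolding vw1_def Kw_def by (rule in_state_measure[OF insert.hyps(2) h1])
      have "lf \<in> lleaves Pw (\<lambda>x. apply1 q Kw \<phi>0 x + apply1 q Kw \<phi>1 x)"
        using hi i1 by (simp add: apply1_add)
      then obtain b ops where o1: "\<forall>(J, A)\<in>set ops. J \<subseteq> B'" and o2: "lf \<in> lleaves (Pc b) (run ops (if b then apply1 q Kw \<phi>1 else apply1 q Kw \<phi>0))"
        using Pw2 s0 s1 by blast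
      show ?thesis
      proof (intro exI[of _ b] exI[of _ "ops @ [({q}, \<lambda>x z. Kw (x q) (z q))]"] conjI)
        show "\<forall>(J, A)\<in>set (ops @ [({q}, \<lambda>x z. Kw (x q) (z q))]). J \<subseteq> insert q B'" using o1 by auto
        show "lf \<in> lleaves (Pc b) (run (ops @ [({q}, \<lambda>x z. Kw (x q) (z q))]) (if b then \<phi>1 else \<phi>0))"
          using o2 by (cases b) (simp_all add: run_append apply1_def)
      qed
    qed
  qed
qed


lemma block_bij: "bij_betw (block m j) (cfgs (blockset m j)) (cfgs {..<m})"
proof (rule bij_betw_imageI)
  show "inj_on (block m j) (cfgs (blockset m j))"
  proof (rule inj_onI)
    fix z z' assume z: "z \<in> cfgs (blockset m j)" and z': "z' \<in> cfgs (blockset m j)"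
      and h: "block m j z = block m j z'"
    show "z = z'"
    proof (rule ext)
      fix k show "z k = z' k"
      proof (cases "k \<in> blockset m j")
        case True
        then obtain i where i: "i < m" "k = j * m + i" unfolding blockset_def
          by (metis atLeastLessThan_iff le_add_diff_inverse add_less_cancel_left)
        thus ?thesis using fun_cong[OF h, of i] unfolding block_def by simp
      next
        case False thus ?thesis using z z' unfolding cfgs_def by auto
      qed
    qed
  qed
  show "block m j ` cfgs (blockset m j) = cfgs {..<m}"
  proof
    show "block m j ` cfgs (blockset m j) \<subseteq> cfgs {..<m}" unfolding block_def cfgs_def by auto
    show "cfgs {..<m} \<subseteq> block m j ` cfgs (blockset m j)"
    proof
      fix w assume w: "w \<in> cfgs {..<m}"
      define z where "z = (\<lambda>k. k \<in> blockset m j \<and> w (k - j * m))"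
      have "z \<in> cfgs (blockset m j)" unfolding z_def cfgs_def by auto
      moreover have "block m j z = w"
        using w unfolding block_def z_def blockset_def cfgs_def by (auto simp: fun_eq_iff)
      ultimately show "w \<in> block m j ` cfgs (blockset m j)" by blast
    qed
  qed
qed

lemma sum_block: "(\<Sum>z\<in>cfgs (blockset m j). F (block m j z)) = (\<Sum>w\<in>cfgs {..<m}. F w)"
  using sum.reindex_bij_betw[OF block_bij, of F] by simp

lemma enc_orth:
  assumes "is_encoding m e"
  shows "(\<Sum>w\<in>cfgs {..<m}. cnj (e b w) * e c w) = (if b = c then 1 else 0)"
proof -
  have a: "qinner {..<m} (e False) (e False) = 1" "qinner {..<m} (e True) (e True) = 1"
    "qinner {..<m} (e False) (e True) = 0"
    using assms unfolding is_encoding_def normalized_state_def by auto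
  have b: "qinner {..<m} (e True) (e False) = 0"
  proof -
    have "qinner {..<m} (e True) (e False) = cnj (qinner {..<m} (e False) (e True))"
      unfolding qinner_def by (simp add: mult.commute)
    thus ?thesis using a(3) by simp
  qed
  show ?thesis using a b unfolding qinner_def by (cases b; cases c) auto
qed

lemma block_upd: "j \<noteq> k \<Longrightarrow> block m k (\<lambda>i. if i \<in> blockset m j then z i else y i) = block m k y"
proof -
  assume jk: "j \<noteq> k"
  have "k * m + i \<notin> blockset m j" if "i < m" for i
  proof
    assume "k * m + i \<in> blockset m j"
    hence "j * m \<le> k * m + i" "k * m + i < j * m + m" unfolding blockset_def by auto
    moreover have "k < j \<or> j < k" using jk by auto
    moreover have "k < j \<Longrightarrow> k * m + m \<le> j * m"
    proof -
      assume "k < j" hence "Suc k * m \<le> j * m" by (intro mult_le_mono1) simp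
      thus ?thesis by simp
    qed
    moreover have "j < k \<Longrightarrow> j * m + m \<le> k * m"
    proof -
      assume "j < k" hence "Suc j * m \<le> k * m" by (intro mult_le_mono1) simp
      thus ?thesis by simp
    qed
    ultimately show False using that by linarith
  qed
  thus ?thesis unfolding block_def by (auto simp: fun_eq_iff)
qed

lemma block_upd_same: "block m j (\<lambda>i. if i \<in> blockset m j then z i else y i) = block m j z"
  unfolding block_def blockset_def by (auto simp: fun_eq_iff)

lemma block_restr: "block m j (\<lambda>i. i \<in> blockset m j \<and> y i) = block m j y"
  unfolding block_def blockset_def by (auto simp: fun_eq_iff)


lemma blockset_sub: "j < N \<Longrightarrow> blockset m j \<subseteq> {..<N*m}"
proof
  fix k assume "j < N" "k \<in> blockset m j"
  hence "k < j * m + m" unfolding blockset_def by auto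
  moreover have "Suc j * m \<le> N * m" using \<open>j < N\<close> by (intro mult_le_mono1) simp
  ultimately show "k \<in> {..<N*m}" by simp
qed

lemma T_delta:
  assumes "is_encoding m e"
  shows "(\<Sum>z\<in>cfgs (blockset m j). cnj (e b (block m j z)) * e c (block m j z)) = (if b = c then 1 else 0)"
  using sum_block[of "\<lambda>w. cnj (e b w) * e c w" m j] enc_orth[OF assms] by simp

lemma inner_z:
  assumes "is_encoding m e"
  shows "(\<Sum>z\<in>cfgs (blockset m j). logical_op e m j X y z * (p * e c (block m j z)))
       = p * (\<Sum>a\<in>UNIV. X a c * e a (block m j y))"
proof -
  have "(\<Sum>z\<in>cfgs (blockset m j). logical_op e m j X y z * (p * e c (block m j z)))
     = (\<Sum>z\<in>cfgs (blockset m j). \<Sum>a\<in>UNIV. \<Sum>b\<in>UNIV. (p * X a b * e a (block m j y)) * (cnj (e b (block m j z)) * e c (block m j z)))"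
    unfolding logical_op_def by (rule sum.cong) (simp_all add: sum_distrib_left sum_distrib_right algebra_simps)
  also have "\<dots> = (\<Sum>a\<in>UNIV. \<Sum>b\<in>UNIV. (p * X a b * e a (block m j y)) * (\<Sum>z\<in>cfgs (blockset m j). cnj (e b (block m j z)) * e c (block m j z)))"
    apply (subst sum.swap[where A="cfgs (blockset m j)"])
    apply (rule sum.cong, simp)
    apply (subst sum.swap[where A="cfgs (blockset m j)"])
    by (simp add: sum_distrib_left)
  also have "\<dots> = (\<Sum>a\<in>UNIV. \<Sum>b\<in>UNIV. (p * X a b * e a (block m j y)) * (if b = c then 1 else 0))"
    by (simp only: T_delta[OF assms])
  also have "\<dots> = p * (\<Sum>a\<in>UNIV. X a c * e a (block m j y))"
    by (simp add: sum_bool algebra_simps)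
  finally show ?thesis .
qed

lemma encode_apply1:
  assumes enc: "is_encoding m e" and jN: "j < N"
  shows "encode e m N (apply1 j X \<psi>) = apply_on (blockset m j) (logical_op e m j X) (encode e m N \<psi>)"
proof (rule ext)
  fix y :: cfg
  let ?B = "blockset m j"
  let ?ov = "\<lambda>z. (\<lambda>i. if i \<in> ?B then z i else y i)"
  have Bsub: "?B \<subseteq> {..<N*m}" by (rule blockset_sub[OF jN])
  show "encode e m N (apply1 j X \<psi>) y = apply_on ?B (logical_op e m j X) (encode e m N \<psi>) y"
  proof (cases "y \<in> cfgs {..<N*m}")
    case False
    have "?ov z \<notin> cfgs {..<N*m}" for z
    proof
      assume "?ov z \<in> cfgs {..<N*m}"
      moreover obtain k where "y k" "k \<notin> {..<N*m}" using False unfolding cfgs_def by auto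
      ultimately show False using Bsub unfolding cfgs_def by (auto split: if_splits)
    qed
    thus ?thesis using False unfolding encode_def apply_on_def by simp
  next
    case True
    have ovin: "?ov z \<in> cfgs {..<N*m}" if "z \<in> cfgs ?B" for z
      using True that Bsub unfolding cfgs_def by auto
    define G where "G = (\<lambda>i. \<Prod>k\<in>{..<N}-{j}. e (i k) (block m k y))"
    have jin: "j \<in> {..<N}" using jN by simp
    have prodsplit: "(\<Prod>k<N. e (i k) (block m k w)) = e (i j) (block m j w) * (\<Prod>k\<in>{..<N}-{j}. e (i k) (block m k w))" for i w
      using prod.remove[OF _ jin, of "\<lambda>k. e (i k) (block m k w)"] by simp
    have Gov: "(\<Prod>k\<in>{..<N}-{j}. e (i k) (block m k (?ov z))) = G i" for i z
      unfolding G_def by (rule prod.cong) (auto simp: block_upd)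
    have encov: "encode e m N \<psi> (?ov z) = (\<Sum>i\<in>cfgs {..<N}. (\<psi> i * G i) * e (i j) (block m j z))"
      if "z \<in> cfgs ?B" for z
      unfolding encode_def using ovin[OF that]
      by (simp add: prodsplit Gov block_upd_same algebra_simps)
    have LOr: "logical_op e m j X (\<lambda>i. i \<in> ?B \<and> y i) = logical_op e m j X y"
      unfolding logical_op_def block_restr ..
    have "apply_on ?B (logical_op e m j X) (encode e m N \<psi>) y
       = (\<Sum>z\<in>cfgs ?B. logical_op e m j X y z * (\<Sum>i\<in>cfgs {..<N}. (\<psi> i * G i) * e (i j) (block m j z)))"
      unfolding apply_on_def LOr by (rule sum.cong) (simp_all add: encov)
    also have "\<dots> = (\<Sum>i\<in>cfgs {..<N}. \<Sum>z\<in>cfgs ?B. logical_op e m j X y z * ((\<psi> i * G i) * e (i j) (block m j z)))"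
      by (subst sum.swap) (simp add: sum_distrib_left)
    also have "\<dots> = (\<Sum>i\<in>cfgs {..<N}. (\<psi> i * G i) * (\<Sum>a\<in>UNIV. X a (i j) * e a (block m j y)))"
      by (simp only: inner_z[OF enc])
    finally have R: "apply_on ?B (logical_op e m j X) (encode e m N \<psi>) y = \<dots>" .
    have L: "encode e m N (apply1 j X \<psi>) y = (\<Sum>i\<in>cfgs {..<N}. (\<Sum>c\<in>UNIV. X (i j) c * \<psi> (i(j:=c))) * (e (i j) (block m j y) * G i))"
      unfolding encode_def using True by (simp add: apply1_eq prodsplit G_def)
    have Gupd: "G (i(j:=a)) = G i" for i a
      unfolding G_def by (rule prod.cong) auto
    have ins: "{..<N} = insert j ({..<N} - {j})" using jN by auto
    have fin: "finite ({..<N} - {j})" by simp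
    have jn: "j \<notin> {..<N} - {j}" by simp
    show ?thesis unfolding L R
      apply (subst (1 2) ins)
      apply (simp only: cfgs_insert_sum[OF fin jn])
      apply (rule sum.cong, simp)
      by (simp add: sum_bool Gupd algebra_simps)
  qed
qed


lemma encode_add: "encode e m N (\<lambda>x. \<psi>1 x + \<psi>2 x) = (\<lambda>y. encode e m N \<psi>1 y + encode e m N \<psi>2 y)"
  unfolding encode_def by (auto simp: sum.distrib algebra_simps)

lemma encode_scale: "encode e m N (\<lambda>x. c * \<psi> x) = (\<lambda>y. c * encode e m N \<psi> y)"
  unfolding encode_def by (auto simp: sum_distrib_left algebra_simps)

definition lvec :: "(bool \<Rightarrow> qstate) \<Rightarrow> nat \<Rightarrow> nat \<Rightarrow> op1 \<Rightarrow> bool \<Rightarrow> qstate" where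
  "lvec e m j V b = (\<lambda>x. \<Sum>a\<in>UNIV. V a b * e a (block m j x))"

lemma in_state_fresh:
  assumes enc: "is_encoding m e" and jN: "j < N"
  shows "in_state (blockset m j) (lvec e m j V b) (encode e m N (apply1 j (proj_col V b) \<psi>))"
proof -
  have "logical_op e m j (proj_col V b) = (\<lambda>x z. lvec e m j V b x * cnj (lvec e m j V b z))"
    unfolding logical_op_def lvec_def proj_col_def by (auto simp: fun_eq_iff sum_bool algebra_simps)
  thus ?thesis unfolding encode_apply1[OF enc jN] by (simp add: in_state_product)
qed

lemma lvec_orth:
  assumes enc: "is_encoding m e" and V: "unitary2 V"
  shows "qinner (blockset m j) (lvec e m j V False) (lvec e m j V True) = 0"
proof -
  have "qinner (blockset m j) (lvec e m j V False) (lvec e m j V True)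
      = (\<Sum>w\<in>cfgs {..<m}. cnj (\<Sum>a\<in>UNIV. V a False * e a w) * (\<Sum>a\<in>UNIV. V a True * e a w))"
    unfolding qinner_def lvec_def by (rule sum_block)
  also have "\<dots> = (\<Sum>a\<in>UNIV. \<Sum>c\<in>UNIV. cnj (V a False) * V c True * (\<Sum>w\<in>cfgs {..<m}. cnj (e a w) * e c w))"
    by (simp add: sum_bool sum.distrib sum_distrib_left algebra_simps)
  also have "\<dots> = (\<Sum>a\<in>UNIV. cnj (V a False) * V a True)"
    by (simp add: enc_orth[OF enc] sum_bool)
  also have "\<dots> = 0" using V unfolding unitary2_def by auto
  finally show ?thesis .
qed


definition pvec :: "(bool \<Rightarrow> complex) \<Rightarrow> op1" where
  "pvec w = (\<lambda>a c. w a * cnj (w c))"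

definition unitv :: "(bool \<Rightarrow> complex) \<Rightarrow> bool" where
  "unitv w \<longleftrightarrow> (\<Sum>a\<in>UNIV. cnj (w a) * w a) = 1"

definition BL :: "nat \<Rightarrow> nat set \<Rightarrow> nat set" where
  "BL m M = (\<Union>k\<in>M. blockset m k)"

lemma blockset_disj: "j \<noteq> k \<Longrightarrow> blockset m j \<inter> blockset m k = {}"
proof -
  assume jk: "j \<noteq> k"
  { fix x assume x: "x \<in> blockset m j" "x \<in> blockset m k"
    hence a: "j * m \<le> x" "x < j * m + m" "k * m \<le> x" "x < k * m + m" unfolding blockset_def by auto
    have "k < j \<or> j < k" using jk by auto
    moreover have "k < j \<Longrightarrow> k * m + m \<le> j * m"
    proof -
      assume "k < j" hence "Suc k * m \<le> j * m" by (intro mult_le_mono1) simp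
      thus ?thesis by simp
    qed
    moreover have "j < k \<Longrightarrow> j * m + m \<le> k * m"
    proof -
      assume "j < k" hence "Suc j * m \<le> k * m" by (intro mult_le_mono1) simp
      thus ?thesis by simp
    qed
    ultimately have False using a by linarith }
  thus ?thesis by blast
qed

lemma col_unit: "unitary2 V \<Longrightarrow> unitv (\<lambda>a. V a b)"
  unfolding unitary2_def unitv_def by (auto dest: spec[of _ b])

lemma pvec_idem: "unitv w \<Longrightarrow> opmul (pvec w) (pvec w) = pvec w"
  unfolding unitv_def opmul_def pvec_def
proof (intro ext)
  fix a c assume u: "(\<Sum>a\<in>UNIV. cnj (w a) * w a) = 1"
  have "(\<Sum>b\<in>UNIV. w a * cnj (w b) * (w b * cnj (w c))) = w a * cnj (w c) * (\<Sum>b\<in>UNIV. cnj (w b) * w b)"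
    by (simp add: sum_distrib_left algebra_simps)
  thus "(\<Sum>b\<in>UNIV. w a * cnj (w b) * (w b * cnj (w c))) = w a * cnj (w c)" using u by simp
qed

lemma apply1_pvec_idem: "unitv w \<Longrightarrow> apply1 j (pvec w) (apply1 j (pvec w) \<psi>) = apply1 j (pvec w) \<psi>"
  by (simp add: apply1_apply1 pvec_idem)

lemma proj_col_pvec: "proj_col V b = pvec (\<lambda>a. V a b)"
  unfolding proj_col_def pvec_def ..

lemma proj_sum:
  assumes "unitary2 V"
  shows "(\<lambda>x. apply1 j (proj_col V False) \<psi> x + apply1 j (proj_col V True) \<psi> x) = \<psi>"
proof -
  have "(\<lambda>a c. proj_col V False a c + proj_col V True a c) = (\<lambda>a c. if a = c then 1 else 0)"
    using unitary2_rows[OF assms] unfolding proj_col_def by (auto simp: fun_eq_iff sum_bool)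
  thus ?thesis using apply1_opadd[of j "proj_col V False" "proj_col V True" \<psi>] apply1_id[of j \<psi>] by simp
qed

lemma repeat_matrix:
  assumes v: "unitv v"
  shows "opmul (opmul (\<lambda>a d. w a * cnj (v d)) (pvec v)) (pvec w)
       = (\<lambda>a d. (\<Sum>e\<in>UNIV. cnj (v e) * w e) * pvec w a d)"
proof -
  have s1: "opmul (\<lambda>a d. w a * cnj (v d)) (pvec v) = (\<lambda>a d. w a * cnj (v d))"
  proof (intro ext)
    fix a d
    have "opmul (\<lambda>a d. w a * cnj (v d)) (pvec v) a d = w a * cnj (v d) * (\<Sum>e\<in>UNIV. cnj (v e) * v e)"
      unfolding opmul_def pvec_def by (simp add: sum_distrib_left algebra_simps)
    thus "opmul (\<lambda>a d. w a * cnj (v d)) (pvec v) a d = w a * cnj (v d)" using v unfolding unitv_def by simp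
  qed
  show ?thesis unfolding s1
    unfolding opmul_def pvec_def by (auto simp: fun_eq_iff sum_distrib_left sum_distrib_right algebra_simps)
qed

lemma exists_nonzero_c:
  assumes V: "unitary2 V" and w: "unitv w"
  shows "\<exists>b. (\<Sum>e\<in>UNIV. cnj (V e b) * w e) \<noteq> 0"
proof (rule ccontr)
  assume "\<not> ?thesis"
  hence z: "\<And>b. (\<Sum>e\<in>UNIV. cnj (V e b) * w e) = 0" by blast
  have "w a = 0" for a
  proof -
    have "w a = (\<Sum>c\<in>UNIV. (if a = c then 1 else 0) * w c)" by (simp add: sum_bool)
    also have "\<dots> = (\<Sum>c\<in>UNIV. (\<Sum>b\<in>UNIV. V a b * cnj (V c b)) * w c)"
      by (simp only: unitary2_rows[OF V])
    also have "\<dots> = (\<Sum>b\<in>UNIV. V a b * (\<Sum>e\<in>UNIV. cnj (V e b) * w e))"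
      by (simp add: sum_bool algebra_simps)
    also have "\<dots> = 0" by (simp add: z)
    finally show ?thesis .
  qed
  thus False using w unfolding unitv_def by simp
qed


lemma opmul_assoc: "opmul A (opmul B C) = opmul (opmul A B) C"
  unfolding opmul_def by (auto simp: fun_eq_iff sum_bool algebra_simps)

lemma sim:
  assumes enc: "is_encoding m e" and RN: "R \<subseteq> {..<N}"
  shows "valid_mt_aux T R M \<Longrightarrow> M \<subseteq> R \<Longrightarrow> (\<forall>j\<in>M. unitv (w j)) \<Longrightarrow>
    \<exists>P. valid_locc_aux P {..<N*m} \<and>
      (\<forall>\<psi> ops lf. (\<forall>j\<in>M. apply1 j (pvec (w j)) \<psi> = \<psi>) \<longrightarrow> (\<forall>(J, A)\<in>set ops. J \<subseteq> BL m M) \<longrightarrow>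
         lf \<in> lleaves P (run ops (encode e m N \<psi>)) \<longrightarrow>
         (\<exists>\<chi>\<in>mleaves T \<psi>. \<exists>ops'. (\<forall>(J, A)\<in>set ops'. J \<subseteq> BL m R) \<and> lf = run ops' (encode e m N \<chi>)))"
proof (induction T arbitrary: M w)
  case MLeaf
  show ?case
  proof (intro exI[of _ Done] conjI allI impI)
    show "valid_locc_aux Done {..<N*m}" by simp
    fix \<psi> ops lf assume h: "\<forall>(J, A)\<in>set ops. J \<subseteq> BL m M" "lf \<in> lleaves Done (run ops (encode e m N \<psi>))"
    have "BL m M \<subseteq> BL m R" using MLeaf.prems(2) unfolding BL_def by auto
    then show "\<exists>\<chi>\<in>mleaves MLeaf \<psi>. \<exists>ops'. (\<forall>(J, A)\<in>set ops'. J \<subseteq> BL m R) \<and> lf = run ops' (encode e m N \<chi>)"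
    proof -
      assume BLs: "BL m M \<subseteq> BL m R"
      have "\<forall>(J, A)\<in>set ops. J \<subseteq> BL m R" using h(1) BLs by fastforce
      thus ?thesis using h(2) by (intro bexI[of _ \<psi>] exI[of _ ops]) auto
    qed
  qed
next
  case (Meas j V f)
  have jR: "j \<in> R" and V: "unitary2 V" and vf: "\<And>b. valid_mt_aux (f b) R (insert j M)"
    using Meas.prems(1) by auto
  have jN: "j < N" using jR RN by auto
  have Bsub: "blockset m j \<subseteq> {..<N*m}" by (rule blockset_sub[OF jN])
  show ?case
  proof (cases "j \<in> M")
    case True
    have wj: "unitv (w j)" using True Meas.prems(3) by blast
    obtain b' where cnz: "(\<Sum>e\<in>UNIV. cnj (V e b') * w j e) \<noteq> 0"
      using exists_nonzero_c[OF V wj] by blast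
    define c where "c = (\<Sum>e\<in>UNIV. cnj (V e b') * w j e)"
    define w' where "w' = w(j := (\<lambda>a. V a b'))"
    have ins: "insert j M = M" using True by blast
    have w'u: "\<forall>i\<in>M. unitv (w' i)" using Meas.prems(3) col_unit[OF V] unfolding w'_def by auto
    have vfb: "valid_mt_aux (f b') R M" using vf[of b'] ins by simp
    obtain P where P: "valid_locc_aux P {..<N*m}" and P2: "\<forall>\<psi> ops lf. (\<forall>i\<in>M. apply1 i (pvec (w' i)) \<psi> = \<psi>) \<longrightarrow> (\<forall>(J, A)\<in>set ops. J \<subseteq> BL m M) \<longrightarrow>
         lf \<in> lleaves P (run ops (encode e m N \<psi>)) \<longrightarrow>
         (\<exists>\<chi>\<in>mleaves (f b') \<psi>. \<exists>ops'. (\<forall>(J, A)\<in>set ops'. J \<subseteq> BL m R) \<and> lf = run ops' (encode e m N \<chi>))"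
      using Meas.IH[OF rangeI vfb Meas.prems(2) w'u] by blast
    show ?thesis
    proof (intro exI[of _ P] conjI allI impI)
      show "valid_locc_aux P {..<N*m}" by (rule P)
      fix \<psi> ops lf assume inv: "\<forall>i\<in>M. apply1 i (pvec (w i)) \<psi> = \<psi>" and ops: "\<forall>(J, A)\<in>set ops. J \<subseteq> BL m M"
        and lf: "lf \<in> lleaves P (run ops (encode e m N \<psi>))"
      define \<psi>' where "\<psi>' = apply1 j (proj_col V b') \<psi>"
      have inv': "\<forall>i\<in>M. apply1 i (pvec (w' i)) \<psi>' = \<psi>'"
      proof
        fix i assume iM: "i \<in> M"
        show "apply1 i (pvec (w' i)) \<psi>' = \<psi>'"
        proof (cases "i = j")
          case True thus ?thesis unfolding w'_def \<psi>'_def proj_col_pvec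
            using apply1_pvec_idem[OF col_unit[OF V]] by simp
        next
          case False
          have "apply1 i (pvec (w' i)) \<psi>' = apply1 j (proj_col V b') (apply1 i (pvec (w i)) \<psi>)"
            unfolding \<psi>'_def w'_def using False by (simp add: apply1_commute)
          thus ?thesis using inv iM unfolding \<psi>'_def by simp
        qed
      qed
      define X where "X = (\<lambda>a d. w j a * cnj (V d b'))"
      have "apply1 j X \<psi>' = apply1 j X (apply1 j (pvec (\<lambda>a. V a b')) (apply1 j (pvec (w j)) \<psi>))"
        unfolding \<psi>'_def proj_col_pvec using inv True by simp
      also have "\<dots> = apply1 j (\<lambda>a d. c * pvec (w j) a d) \<psi>"
        unfolding apply1_apply1 opmul_assoc X_def c_def repeat_matrix[OF col_unit[OF V]] ..
      also have "\<dots> = (\<lambda>x. c * \<psi> x)" using inv True by (simp add: apply1_opscale)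
      finally have eq: "apply1 j X \<psi>' = (\<lambda>x. c * \<psi> x)" .
      have psieq: "\<psi> = (\<lambda>x. (1 / c) * apply1 j X \<psi>' x)"
        using cnz unfolding eq c_def by (auto simp: fun_eq_iff)
      have "encode e m N \<psi> = apply_on (blockset m j) (\<lambda>x z. (1 / c) * logical_op e m j X x z) (encode e m N \<psi>')"
        apply (subst psieq)
        by (simp only: encode_scale encode_apply1[OF enc jN] apply_on_scale)
      hence runeq: "run ops (encode e m N \<psi>) = run (ops @ [(blockset m j, \<lambda>x z. (1 / c) * logical_op e m j X x z)]) (encode e m N \<psi>')"
        by (simp add: run_append)
      have ops2: "\<forall>(J, A)\<in>set (ops @ [(blockset m j, \<lambda>x z. (1 / c) * logical_op e m j X x z)]). J \<subseteq> BL m M"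
      proof -
        have Bj: "blockset m j \<subseteq> BL m M" using True unfolding BL_def by blast
        show ?thesis using ops Bj by auto
      qed
      have lf2: "lf \<in> lleaves P (run (ops @ [(blockset m j, \<lambda>x z. (1 / c) * logical_op e m j X x z)]) (encode e m N \<psi>'))"
        using lf unfolding runeq .
      obtain \<chi> ops' where \<chi>: "\<chi> \<in> mleaves (f b') \<psi>'" and o': "\<forall>(J, A)\<in>set ops'. J \<subseteq> BL m R" "lf = run ops' (encode e m N \<chi>)"
        using mp[OF mp[OF mp[OF P2[THEN spec, THEN spec, THEN spec] inv'] ops2] lf2] by blast
      have "\<chi> \<in> mleaves (Meas j V f) \<psi>" using \<chi> unfolding \<psi>'_def mleaves.simps UN_iff by blast
      thus "\<exists>\<chi>\<in>mleaves (Meas j V f) \<psi>. \<exists>ops'. (\<forall>(J, A)\<in>set ops'. J \<subseteq> BL m R) \<and> lf = run ops' (encode e m N \<chi>)"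
        using o' by blast
    qed
  next
    case False
    define W where "W = (\<lambda>b. w(j := (\<lambda>a. V a b)))"
    have Wu: "\<forall>i\<in>insert j M. unitv (W b i)" for b
      using Meas.prems(3) col_unit[OF V] unfolding W_def by auto
    have sub: "insert j M \<subseteq> R" using jR Meas.prems(2) by auto
    have "\<forall>b. \<exists>P. valid_locc_aux P {..<N*m} \<and>
      (\<forall>\<psi> ops lf. (\<forall>i\<in>insert j M. apply1 i (pvec (W b i)) \<psi> = \<psi>) \<longrightarrow> (\<forall>(J, A)\<in>set ops. J \<subseteq> BL m (insert j M)) \<longrightarrow>
         lf \<in> lleaves P (run ops (encode e m N \<psi>)) \<longrightarrow>
         (\<exists>\<chi>\<in>mleaves (f b) \<psi>. \<exists>ops'. (\<forall>(J, A)\<in>set ops'. J \<subseteq> BL m R) \<and> lf = run ops' (encode e m N \<chi>)))"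
      using Meas.IH[OF rangeI vf sub Wu] by blast
    then obtain Pc where Pcall: "\<forall>b. valid_locc_aux (Pc b) {..<N*m} \<and> (\<forall>\<psi> ops lf. (\<forall>i\<in>insert j M. apply1 i (pvec (W b i)) \<psi> = \<psi>) \<longrightarrow> (\<forall>(J, A)\<in>set ops. J \<subseteq> BL m (insert j M)) \<longrightarrow>
         lf \<in> lleaves (Pc b) (run ops (encode e m N \<psi>)) \<longrightarrow>
         (\<exists>\<chi>\<in>mleaves (f b) \<psi>. \<exists>ops'. (\<forall>(J, A)\<in>set ops'. J \<subseteq> BL m R) \<and> lf = run ops' (encode e m N \<chi>)))"
      by (rule choice[THEN exE]) blast
    have Pc: "\<And>b. valid_locc_aux (Pc b) {..<N*m}" using Pcall by blast
    note Pc2 = Pcall[THEN spec, THEN conjunct2]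
    have fin: "finite (blockset m j)" unfolding blockset_def by simp
    have Pcv: "\<forall>b. valid_locc_aux (Pc b) {..<N*m}" using Pc by blast
    obtain P where P: "valid_locc_aux P {..<N*m}" and P2: "\<forall>\<phi>0 \<phi>1 lf. in_state (blockset m j) (lvec e m j V False) \<phi>0 \<longrightarrow> in_state (blockset m j) (lvec e m j V True) \<phi>1 \<longrightarrow>
        lf \<in> lleaves P (\<lambda>x. \<phi>0 x + \<phi>1 x) \<longrightarrow>
        (\<exists>b ops. (\<forall>(J, A)\<in>set ops. J \<subseteq> blockset m j) \<and> lf \<in> lleaves (Pc b) (run ops (if b then \<phi>1 else \<phi>0)))"
      using walgate[OF fin Bsub lvec_orth[OF enc V] Pcv] by blast
    show ?thesis
    proof (intro exI[of _ P] conjI allI impI)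
      show "valid_locc_aux P {..<N*m}" by (rule P)
      fix \<psi> ops lf assume inv: "\<forall>i\<in>M. apply1 i (pvec (w i)) \<psi> = \<psi>" and ops: "\<forall>(J, A)\<in>set ops. J \<subseteq> BL m M"
        and lf: "lf \<in> lleaves P (run ops (encode e m N \<psi>))"
      define \<psi>b where "\<psi>b = (\<lambda>b. apply1 j (proj_col V b) \<psi>)"
      define \<phi>b where "\<phi>b = (\<lambda>b. run ops (encode e m N (\<psi>b b)))"
      have dsj: "\<forall>(J, A)\<in>set ops. J \<inter> blockset m j = {}"
      proof -
        have "\<forall>k\<in>M. blockset m k \<inter> blockset m j = {}" using False by (intro ballI blockset_disj) auto
        hence "BL m M \<inter> blockset m j = {}" unfolding BL_def by blast
        thus ?thesis using ops by blast
      qed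
      have st: "in_state (blockset m j) (lvec e m j V b) (\<phi>b b)" for b
        unfolding \<phi>b_def \<psi>b_def by (rule in_state_run[OF in_state_fresh[OF enc jN] dsj])
      have sum: "run ops (encode e m N \<psi>) = (\<lambda>x. \<phi>b False x + \<phi>b True x)"
      proof -
        have "encode e m N \<psi> = encode e m N (\<lambda>x. \<psi>b False x + \<psi>b True x)"
          unfolding \<psi>b_def proj_sum[OF V] ..
        thus ?thesis unfolding \<phi>b_def by (simp add: encode_add run_add)
      qed
      obtain b opsW where oW: "\<forall>(J, A)\<in>set opsW. J \<subseteq> blockset m j"
        and lfb: "lf \<in> lleaves (Pc b) (run opsW (if b then \<phi>b True else \<phi>b False))"
      proof -
        have lf': "lf \<in> lleaves P (\<lambda>x. \<phi>b False x + \<phi>b True x)" using lf unfolding sum .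
        show ?thesis using mp[OF mp[OF mp[OF P2[THEN spec, THEN spec, THEN spec] st[of False]] st[of True]] lf'] that by blast
      qed
      have lfb': "lf \<in> lleaves (Pc b) (run (opsW @ ops) (encode e m N (\<psi>b b)))"
        using lfb unfolding \<phi>b_def by (cases b) (simp_all add: run_append)
      have ops2: "\<forall>(J, A)\<in>set (opsW @ ops). J \<subseteq> BL m (insert j M)"
      proof -
        have "BL m (insert j M) = blockset m j \<union> BL m M" unfolding BL_def by simp
        thus ?thesis using ops oW by auto
      qed
      have inv2: "\<forall>i\<in>insert j M. apply1 i (pvec (W b i)) (\<psi>b b) = \<psi>b b"
      proof
        fix i assume iM: "i \<in> insert j M"
        show "apply1 i (pvec (W b i)) (\<psi>b b) = \<psi>b b"
        proof (cases "i = j")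
          case True thus ?thesis unfolding W_def \<psi>b_def proj_col_pvec
            using apply1_pvec_idem[OF col_unit[OF V]] by simp
        next
          case ij: False
          hence iM': "i \<in> M" using iM by simp
          have "apply1 i (pvec (W b i)) (\<psi>b b) = apply1 j (proj_col V b) (apply1 i (pvec (w i)) \<psi>)"
            unfolding \<psi>b_def W_def using ij by (simp add: apply1_commute)
          thus ?thesis using inv iM' unfolding \<psi>b_def by simp
        qed
      qed
      obtain \<chi> ops' where \<chi>: "\<chi> \<in> mleaves (f b) (\<psi>b b)" and o': "\<forall>(J, A)\<in>set ops'. J \<subseteq> BL m R" "lf = run ops' (encode e m N \<chi>)"
        using mp[OF mp[OF mp[OF Pc2[of b, THEN spec, THEN spec, THEN spec] inv2] ops2] lfb'] by blast
      have "\<chi> \<in> mleaves (Meas j V f) \<psi>" using \<chi> unfolding \<psi>b_def mleaves.simps UN_iff by blast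
      thus "\<exists>\<chi>\<in>mleaves (Meas j V f) \<psi>. \<exists>ops'. (\<forall>(J, A)\<in>set ops'. J \<subseteq> BL m R) \<and> lf = run ops' (encode e m N \<chi>)"
        using o' by blast
    qed
  qed
qed


lemma cfgs_union_sum:
  assumes "finite A" "finite B" "A \<inter> B = {}"
  shows "sum h (cfgs (A \<union> B)) = (\<Sum>a\<in>cfgs A. \<Sum>b\<in>cfgs B. h (\<lambda>j. a j \<or> b j))"
proof -
  have bij: "bij_betw (\<lambda>(a, b). (\<lambda>j. a j \<or> b j)) (cfgs A \<times> cfgs B) (cfgs (A \<union> B))"
  proof (rule bij_betw_imageI)
    show "inj_on (\<lambda>(a, b). (\<lambda>j. a j \<or> b j)) (cfgs A \<times> cfgs B)"
    proof (rule inj_onI, clarify)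
      fix a b a' b' assume a: "a \<in> cfgs A" "a' \<in> cfgs A" and b: "b \<in> cfgs B" "b' \<in> cfgs B"
        and h: "(\<lambda>j. a j \<or> b j) = (\<lambda>j. a' j \<or> b' j)"
      have "a j = a' j \<and> b j = b' j" for j
      proof -
        have hj: "(a j \<or> b j) = (a' j \<or> b' j)" using fun_cong[OF h, of j] by simp
        show ?thesis
        proof (cases "j \<in> A")
          case True hence "j \<notin> B" using assms(3) by auto
          thus ?thesis using hj b unfolding cfgs_def by auto
        next
          case False thus ?thesis using hj a unfolding cfgs_def by auto
        qed
      qed
      thus "a = a' \<and> b = b'" by (auto simp: fun_eq_iff)
    qed
    show "(\<lambda>(a, b). (\<lambda>j. a j \<or> b j)) ` (cfgs A \<times> cfgs B) = cfgs (A \<union> B)"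
    proof
      show "(\<lambda>(a, b). (\<lambda>j. a j \<or> b j)) ` (cfgs A \<times> cfgs B) \<subseteq> cfgs (A \<union> B)"
        unfolding cfgs_def by auto
      show "cfgs (A \<union> B) \<subseteq> (\<lambda>(a, b). (\<lambda>j. a j \<or> b j)) ` (cfgs A \<times> cfgs B)"
      proof
        fix x assume x: "x \<in> cfgs (A \<union> B)"
        have "x = (\<lambda>(a, b). (\<lambda>j. a j \<or> b j)) ((\<lambda>j. j \<in> A \<and> x j), (\<lambda>j. j \<in> B \<and> x j))"
          using x unfolding cfgs_def by (auto simp: fun_eq_iff)
        moreover have "((\<lambda>j. j \<in> A \<and> x j), (\<lambda>j. j \<in> B \<and> x j)) \<in> cfgs A \<times> cfgs B"
          unfolding cfgs_def by auto
        ultimately show "x \<in> (\<lambda>(a, b). (\<lambda>j. a j \<or> b j)) ` (cfgs A \<times> cfgs B)" by blast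
      qed
    qed
  qed
  have "sum h (cfgs (A \<union> B)) = sum (h \<circ> (\<lambda>(a, b). (\<lambda>j. a j \<or> b j))) (cfgs A \<times> cfgs B)"
    using sum.reindex_bij_betw[OF bij, of h] by simp
  also have "\<dots> = sum (\<lambda>(a, b). h (\<lambda>j. a j \<or> b j)) (cfgs A \<times> cfgs B)"
    by (rule sum.cong) auto
  also have "\<dots> = (\<Sum>a\<in>cfgs A. \<Sum>b\<in>cfgs B. h (\<lambda>j. a j \<or> b j))"
    by (rule sum.cartesian_product[symmetric])
  finally show ?thesis .
qed

lemma encoding_pos:
  assumes "is_encoding m e" shows "0 < m"
proof (rule ccontr)
  assume "\<not> 0 < m" hence m0: "m = 0" by simp
  define p where "p = e False (\<lambda>_. False)"
  define q where "q = e True (\<lambda>_. False)"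
  have h: "cnj p * p = 1" "cnj q * q = 1" "cnj p * q = 0"
    using assms unfolding is_encoding_def normalized_state_def qinner_def m0 p_def q_def
    by (simp_all add: cfgs_empty)
  have "q = q * (cnj p * p)" using h by simp
  also have "\<dots> = (cnj p * q) * p" by (simp add: algebra_simps)
  finally have "q = 0" using h by simp
  thus False using h by simp
qed

lemma logicals_locals:
  assumes enc: "is_encoding m e"
  shows "k \<le> n \<Longrightarrow> apply_logicals e m k U (encode e m n \<phi>) = encode e m n (apply_locals k U \<phi>)"
proof (induction k)
  case 0 thus ?case by simp
next
  case (Suc k)
  hence "k < n" by simp
  thus ?case using Suc by (simp add: encode_apply1[OF enc])
qed


lemma blockmap_block:
  assumes "0 < m" "l < m"
  shows "blockmap m pos (k * m + l) = pos k * m + l"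
  unfolding blockmap_def using assms by simp

lemma blockmap_img:
  assumes m: "0 < m"
  shows "blockmap m pos ` {..<n*m} = (\<Union>k\<in>pos ` {..<n}. blockset m k)"
proof
  show "blockmap m pos ` {..<n*m} \<subseteq> (\<Union>k\<in>pos ` {..<n}. blockset m k)"
  proof
    fix x assume "x \<in> blockmap m pos ` {..<n*m}"
    then obtain j where j: "j < n * m" "x = blockmap m pos j" by auto
    have "j div m < n" using j(1) m by (simp add: div_less_iff_less_mult)
    moreover have "x \<in> blockset m (pos (j div m))"
      unfolding j(2) blockmap_def blockset_def using m by simp
    ultimately show "x \<in> (\<Union>k\<in>pos ` {..<n}. blockset m k)" by blast
  qed
  show "(\<Union>k\<in>pos ` {..<n}. blockset m k) \<subseteq> blockmap m pos ` {..<n*m}"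
  proof
    fix x assume "x \<in> (\<Union>k\<in>pos ` {..<n}. blockset m k)"
    then obtain k where k: "k < n" "x \<in> blockset m (pos k)" by auto
    define l where "l = x - pos k * m"
    have l: "l < m" "x = pos k * m + l" using k(2) unfolding l_def blockset_def by auto
    have "k * m + l < n * m"
    proof -
      have "Suc k * m \<le> n * m" using k(1) by (intro mult_le_mono1) simp
      thus ?thesis using l(1) by simp
    qed
    moreover have "blockmap m pos (k * m + l) = x" using blockmap_block[OF m l(1)] l(2) by simp
    ultimately show "x \<in> blockmap m pos ` {..<n*m}" by (metis image_eqI lessThan_iff)
  qed
qed

lemma target_factor:
  assumes m: "0 < m" and inj: "inj_on pos {..<n}"
  shows "(\<Sum>a\<in>cfgs (pos ` {..<n}). relabel pos {..<n} \<phi> a * (\<Prod>k\<in>pos ` {..<n}. e (a k) (block m k y)))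
    = relabel (blockmap m pos) {..<n*m} (encode e m n \<phi>) (\<lambda>j. j \<in> (\<Union>k\<in>pos ` {..<n}. blockset m k) \<and> y j)"
proof -
  let ?S = "pos ` {..<n}"
  let ?BS = "\<Union>k\<in>pos ` {..<n}. blockset m k"
  define sp where "sp = (\<lambda>i::cfg. \<lambda>j. \<exists>k<n. pos k = j \<and> i k)"
  define un where "un = (\<lambda>a::cfg. \<lambda>k. k < n \<and> a (pos k))"
  have unsp: "un (sp i) = i" if "i \<in> cfgs {..<n}" for i
    using that inj unfolding un_def sp_def cfgs_def inj_on_def by (auto simp: fun_eq_iff)
  have spun: "sp (un a) = a" if "a \<in> cfgs ?S" for a
    using that unfolding un_def sp_def cfgs_def by (auto simp: fun_eq_iff)
  have bij: "bij_betw sp (cfgs {..<n}) (cfgs ?S)"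
    by (rule bij_betw_byWitness[where f'=un]) (auto simp: unsp spun, auto simp: sp_def un_def cfgs_def)
  have spk: "sp i (pos k) = i k" if "i \<in> cfgs {..<n}" "k < n" for i k
    using that inj unfolding sp_def cfgs_def inj_on_def by auto
  have spin: "sp i \<in> cfgs ?S" for i unfolding sp_def cfgs_def by auto
  have L: "(\<Sum>a\<in>cfgs ?S. relabel pos {..<n} \<phi> a * (\<Prod>k\<in>?S. e (a k) (block m k y)))
      = (\<Sum>i\<in>cfgs {..<n}. \<phi> i * (\<Prod>k<n. e (i k) (block m (pos k) y)))"
  proof -
    have "(\<Sum>a\<in>cfgs ?S. relabel pos {..<n} \<phi> a * (\<Prod>k\<in>?S. e (a k) (block m k y)))
       = (\<Sum>i\<in>cfgs {..<n}. relabel pos {..<n} \<phi> (sp i) * (\<Prod>k\<in>?S. e (sp i k) (block m k y)))"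
      using sum.reindex_bij_betw[OF bij, of "\<lambda>a. relabel pos {..<n} \<phi> a * (\<Prod>k\<in>?S. e (a k) (block m k y))"] by simp
    also have "\<dots> = (\<Sum>i\<in>cfgs {..<n}. \<phi> i * (\<Prod>k<n. e (i k) (block m (pos k) y)))"
    proof (rule sum.cong)
      fix i assume i: "i \<in> cfgs {..<n}"
      have r: "relabel pos {..<n} \<phi> (sp i) = \<phi> i"
        using spin[of i] unsp[OF i] unfolding relabel_def un_def by simp
      have p: "(\<Prod>k\<in>?S. e (sp i k) (block m k y)) = (\<Prod>k<n. e (i k) (block m (pos k) y))"
        by (subst prod.reindex[OF inj]) (simp add: spk[OF i])
      show "relabel pos {..<n} \<phi> (sp i) * (\<Prod>k\<in>?S. e (sp i k) (block m k y)) = \<phi> i * (\<Prod>k<n. e (i k) (block m (pos k) y))"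
        unfolding r p ..
    qed simp
    finally show ?thesis .
  qed
  define w' where "w' = (\<lambda>j. j \<in> {..<n*m} \<and> (\<lambda>j. j \<in> ?BS \<and> y j) (blockmap m pos j))"
  have w'in: "w' \<in> cfgs {..<n*m}" unfolding w'_def cfgs_def by auto
  have blk: "block m k w' = block m (pos k) y" if "k < n" for k
  proof -
    have "k * m + l < n * m" if "l < m" for l
    proof -
      have "Suc k * m \<le> n * m" using \<open>k < n\<close> by (intro mult_le_mono1) simp
      thus ?thesis using that by simp
    qed
    moreover have "pos k * m + l \<in> ?BS" if "l < m" for l
    proof -
      have "pos k * m + l \<in> blockset m (pos k)" using that unfolding blockset_def by simp
      thus ?thesis using \<open>k < n\<close> by blast
    qed
    ultimately show ?thesis unfolding block_def w'_def using blockmap_block[OF m] by (auto simp: fun_eq_iff)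
  qed
  have inimg: "(\<lambda>j. j \<in> ?BS \<and> y j) \<in> cfgs (blockmap m pos ` {..<n*m})"
    unfolding blockmap_img[OF m] cfgs_def by auto
  have R: "relabel (blockmap m pos) {..<n*m} (encode e m n \<phi>) (\<lambda>j. j \<in> ?BS \<and> y j)
      = (\<Sum>i\<in>cfgs {..<n}. \<phi> i * (\<Prod>k<n. e (i k) (block m (pos k) y)))"
  proof -
    have "relabel (blockmap m pos) {..<n*m} (encode e m n \<phi>) (\<lambda>j. j \<in> ?BS \<and> y j) = encode e m n \<phi> w'"
      unfolding relabel_def w'_def using inimg by simp
    also have "\<dots> = (\<Sum>i\<in>cfgs {..<n}. \<phi> i * (\<Prod>k<n. e (i k) (block m k w')))"
      unfolding encode_def using w'in by simp
    also have "\<dots> = (\<Sum>i\<in>cfgs {..<n}. \<phi> i * (\<Prod>k<n. e (i k) (block m (pos k) y)))"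
      by (rule sum.cong, simp, rule arg_cong[where f="\<lambda>x. _ * x"], rule prod.cong) (simp_all add: blk)
    finally show ?thesis .
  qed
  show ?thesis unfolding L R ..
qed


lemma block_outside:
  assumes "k \<notin> S"
  shows "block m k (\<lambda>j. j \<notin> (\<Union>k\<in>S. blockset m k) \<and> y j) = block m k y"
proof -
  have "k * m + l \<notin> (\<Union>k\<in>S. blockset m k)" if "l < m" for l
  proof
    assume "k * m + l \<in> (\<Union>k\<in>S. blockset m k)"
    then obtain k' where k': "k' \<in> S" "k * m + l \<in> blockset m k'" by auto
    have "k * m + l \<in> blockset m k" using that unfolding blockset_def by simp
    moreover have "k \<noteq> k'" using k' assms by auto
    ultimately show False using blockset_disj[of k k' m] k' by auto
  qed
  thus ?thesis unfolding block_def by (auto simp: fun_eq_iff)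
qed

lemma enc_in_state:
  assumes enc: "is_encoding m e" and inj: "inj_on pos {..<n}" and sub: "pos ` {..<n} \<subseteq> {..<N}"
    and h: "in_state (pos ` {..<n}) (relabel pos {..<n} \<phi>) \<chi>"
  shows "in_state (\<Union>k\<in>pos ` {..<n}. blockset m k) (relabel (blockmap m pos) {..<n*m} (encode e m n \<phi>)) (encode e m N \<chi>)"
proof -
  let ?S = "pos ` {..<n}"
  let ?BS = "\<Union>k\<in>pos ` {..<n}. blockset m k"
  define Rr where "Rr = {..<N} - ?S"
  have m: "0 < m" by (rule encoding_pos[OF enc])
  obtain r where r: "\<And>x. \<chi> x = relabel pos {..<n} \<phi> (\<lambda>j. j \<in> ?S \<and> x j) * r (\<lambda>j. j \<notin> ?S \<and> x j)"
    using h unfolding in_state_def by blast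
  define t where "t = relabel pos {..<n} \<phi>"
  have un: "{..<N} = ?S \<union> Rr" using sub unfolding Rr_def by auto
  have dj: "?S \<inter> Rr = {}" unfolding Rr_def by auto
  have finS: "finite ?S" and finR: "finite Rr" unfolding Rr_def by auto
  have BSsub: "?BS \<subseteq> {..<N*m}"
  proof (rule UN_least)
    fix k assume "k \<in> ?S" hence "k < N" using sub by auto
    thus "blockset m k \<subseteq> {..<N*m}" by (rule blockset_sub)
  qed
  define r' where "r' = (\<lambda>y. if y \<in> cfgs {..<N*m} then (\<Sum>b\<in>cfgs Rr. r b * (\<Prod>k\<in>Rr. e (b k) (block m k y))) else 0)"
  have main: "encode e m N \<chi> y = relabel (blockmap m pos) {..<n*m} (encode e m n \<phi>) (\<lambda>j. j \<in> ?BS \<and> y j) * r' (\<lambda>j. j \<notin> ?BS \<and> y j)" for y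
  proof (cases "y \<in> cfgs {..<N*m}")
    case False
    have "(\<lambda>j. j \<notin> ?BS \<and> y j) \<notin> cfgs {..<N*m}"
      using False BSsub unfolding cfgs_def by auto
    thus ?thesis using False unfolding encode_def r'_def by simp
  next
    case True
    have yin: "(\<lambda>j. j \<notin> ?BS \<and> y j) \<in> cfgs {..<N*m}" using True unfolding cfgs_def by auto
    have "encode e m N \<chi> y = (\<Sum>i\<in>cfgs (?S \<union> Rr). t (\<lambda>j. j \<in> ?S \<and> i j) * r (\<lambda>j. j \<notin> ?S \<and> i j) * (\<Prod>k\<in>?S \<union> Rr. e (i k) (block m k y)))"
      unfolding encode_def using True by (simp add: r t_def un[symmetric])
    also have "\<dots> = (\<Sum>a\<in>cfgs ?S. \<Sum>b\<in>cfgs Rr. (t a * (\<Prod>k\<in>?S. e (a k) (block m k y))) * (r b * (\<Prod>k\<in>Rr. e (b k) (block m k y))))"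
    proof -
      have "(\<Sum>i\<in>cfgs (?S \<union> Rr). t (\<lambda>j. j \<in> ?S \<and> i j) * r (\<lambda>j. j \<notin> ?S \<and> i j) * (\<Prod>k\<in>?S \<union> Rr. e (i k) (block m k y)))
        = (\<Sum>a\<in>cfgs ?S. \<Sum>b\<in>cfgs Rr. t (\<lambda>j. j \<in> ?S \<and> (a j \<or> b j)) * r (\<lambda>j. j \<notin> ?S \<and> (a j \<or> b j)) * (\<Prod>k\<in>?S \<union> Rr. e (a k \<or> b k) (block m k y)))"
        by (rule cfgs_union_sum[OF finS finR dj])
      also have "\<dots> = (\<Sum>a\<in>cfgs ?S. \<Sum>b\<in>cfgs Rr. (t a * (\<Prod>k\<in>?S. e (a k) (block m k y))) * (r b * (\<Prod>k\<in>Rr. e (b k) (block m k y))))"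
      proof (intro sum.cong refl)
        fix a b assume a: "a \<in> cfgs ?S" and b: "b \<in> cfgs Rr"
        have e1: "(\<lambda>j. j \<in> ?S \<and> (a j \<or> b j)) = a" using a b dj unfolding cfgs_def by (auto simp: fun_eq_iff)
        have e2: "(\<lambda>j. j \<notin> ?S \<and> (a j \<or> b j)) = b" using a b dj unfolding cfgs_def by (auto simp: fun_eq_iff)
        have p: "(\<Prod>k\<in>?S \<union> Rr. e (a k \<or> b k) (block m k y)) = (\<Prod>k\<in>?S. e (a k) (block m k y)) * (\<Prod>k\<in>Rr. e (b k) (block m k y))"
        proof -
          have bS: "\<And>k. k \<in> ?S \<Longrightarrow> \<not> b k" using b dj unfolding cfgs_def by blast
          have aR: "\<And>k. k \<in> Rr \<Longrightarrow> \<not> a k" using a dj unfolding cfgs_def by blast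
          have "(\<Prod>k\<in>?S \<union> Rr. e (a k \<or> b k) (block m k y)) = (\<Prod>k\<in>?S. e (a k \<or> b k) (block m k y)) * (\<Prod>k\<in>Rr. e (a k \<or> b k) (block m k y))"
            by (rule prod.union_disjoint[OF finS finR dj])
          moreover have "(\<Prod>k\<in>?S. e (a k \<or> b k) (block m k y)) = (\<Prod>k\<in>?S. e (a k) (block m k y))"
            by (rule prod.cong[OF refl]) (simp add: bS)
          moreover have "(\<Prod>k\<in>Rr. e (a k \<or> b k) (block m k y)) = (\<Prod>k\<in>Rr. e (b k) (block m k y))"
            by (rule prod.cong[OF refl]) (simp add: aR)
          ultimately show ?thesis by simp
        qed
        show "t (\<lambda>j. j \<in> ?S \<and> (a j \<or> b j)) * r (\<lambda>j. j \<notin> ?S \<and> (a j \<or> b j)) * (\<Prod>k\<in>?S \<union> Rr. e (a k \<or> b k) (block m k y))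
          = (t a * (\<Prod>k\<in>?S. e (a k) (block m k y))) * (r b * (\<Prod>k\<in>Rr. e (b k) (block m k y)))"
          unfolding e1 e2 p by (simp add: algebra_simps)
      qed
      finally show ?thesis .
    qed
    also have "\<dots> = (\<Sum>a\<in>cfgs ?S. t a * (\<Prod>k\<in>?S. e (a k) (block m k y))) * (\<Sum>b\<in>cfgs Rr. r b * (\<Prod>k\<in>Rr. e (b k) (block m k y)))"
      by (simp add: sum_product)
    also have "(\<Sum>a\<in>cfgs ?S. t a * (\<Prod>k\<in>?S. e (a k) (block m k y))) = relabel (blockmap m pos) {..<n*m} (encode e m n \<phi>) (\<lambda>j. j \<in> ?BS \<and> y j)"
      unfolding t_def by (rule target_factor[OF m inj])
    also have "(\<Sum>b\<in>cfgs Rr. r b * (\<Prod>k\<in>Rr. e (b k) (block m k y))) = r' (\<lambda>j. j \<notin> ?BS \<and> y j)"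
    proof -
      have "(\<Prod>k\<in>Rr. e (b k) (block m k (\<lambda>j. j \<notin> ?BS \<and> y j))) = (\<Prod>k\<in>Rr. e (b k) (block m k y))" for b
      proof (rule prod.cong[OF refl])
        fix k assume "k \<in> Rr" hence "k \<notin> ?S" unfolding Rr_def by simp
        thus "e (b k) (block m k (\<lambda>j. j \<notin> ?BS \<and> y j)) = e (b k) (block m k y)"
          using block_outside[of k ?S m y] by simp
      qed
      thus ?thesis unfolding r'_def using yin by simp
    qed
    finally show ?thesis .
  qed
  thus ?thesis unfolding in_state_def by blast
qed


theorem theorem16:
  fixes \<Psi> :: "(nat \<times> qstate) set" and e :: "bool \<Rightarrow> qstate" and m :: nat
  assumes "\<forall>(N, \<psi>)\<in>\<Psi>. normalized_state {..<N} \<psi>"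
    and "universal_LPM \<Psi>"
    and "is_encoding m e"
  shows "encoded_universal_LOCC e m (encoded_family e m \<Psi>)"
  unfolding encoded_universal_LOCC_def
proof (intro allI impI)
  fix n \<phi> assume nphi: "normalized_state {..<n} \<phi>"
  have enc: "is_encoding m e" by (rule assms(3))
  have "\<exists>(N, \<psi>)\<in>\<Psi>. \<exists>pos T.
          inj_on pos {..<n} \<and> pos ` {..<n} \<subseteq> {..<N} \<and>
          valid_mt ({..<N} - pos ` {..<n}) {} T \<and>
          (\<forall>\<chi>\<in>mleaves T \<psi>. \<exists>U. (\<forall>k<n. unitary2 (U k)) \<and>
              in_state (pos ` {..<n}) (relabel pos {..<n} (apply_locals n U \<phi>)) \<chi>)"
    using assms(2) nphi unfolding universal_LPM_def by simp
  then obtain Np where memp: "Np \<in> \<Psi>" and hp: "case Np of (N, \<psi>) \<Rightarrow> \<exists>pos T.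
          inj_on pos {..<n} \<and> pos ` {..<n} \<subseteq> {..<N} \<and>
          valid_mt ({..<N} - pos ` {..<n}) {} T \<and>
          (\<forall>\<chi>\<in>mleaves T \<psi>. \<exists>U. (\<forall>k<n. unitary2 (U k)) \<and>
              in_state (pos ` {..<n}) (relabel pos {..<n} (apply_locals n U \<phi>)) \<chi>)"
    by (rule bexE)
  obtain N \<psi> where Np: "Np = (N, \<psi>)" by (cases Np)
  have mem: "(N, \<psi>) \<in> \<Psi>" using memp Np by simp
  obtain pos T where inj: "inj_on pos {..<n}" and sub: "pos ` {..<n} \<subseteq> {..<N}"
    and vT: "valid_mt ({..<N} - pos ` {..<n}) {} T"
    and lv: "\<forall>\<chi>\<in>mleaves T \<psi>. \<exists>U. (\<forall>k<n. unitary2 (U k)) \<and>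
              in_state (pos ` {..<n}) (relabel pos {..<n} (apply_locals n U \<phi>)) \<chi>"
    using hp unfolding Np prod.case by (elim exE conjE)
  define R where "R = {..<N} - pos ` {..<n}"
  have RN: "R \<subseteq> {..<N}" unfolding R_def by auto
  obtain P where P: "valid_locc_aux P {..<N*m}" and P2: "\<forall>\<psi>' ops lf. (\<forall>j\<in>{}. apply1 j (pvec ((\<lambda>_ _. 0) j)) \<psi>' = \<psi>') \<longrightarrow> (\<forall>(J, A)\<in>set ops. J \<subseteq> BL m {}) \<longrightarrow>
         lf \<in> lleaves P (run ops (encode e m N \<psi>')) \<longrightarrow>
         (\<exists>\<chi>\<in>mleaves T \<psi>'. \<exists>ops'. (\<forall>(J, A)\<in>set ops'. J \<subseteq> BL m R) \<and> lf = run ops' (encode e m N \<chi>))"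
  proof -
    have vT': "valid_mt_aux T R {}" using vT unfolding valid_mt_def R_def .
    show ?thesis using sim[OF enc RN vT' empty_subsetI, of "\<lambda>_ _. 0"] that by blast
  qed
  have dis: "BL m R \<inter> (\<Union>k\<in>pos ` {..<n}. blockset m k) = {}"
  proof -
    have "blockset m k \<inter> blockset m k' = {}" if "k \<in> R" "k' \<in> pos ` {..<n}" for k k'
      using that blockset_disj[of k k' m] unfolding R_def by auto
    thus ?thesis unfolding BL_def by blast
  qed
  show "\<exists>(N, \<psi>)\<in>encoded_family e m \<Psi>. \<exists>pos P.
          inj_on pos {..<n} \<and> pos ` {..<n} \<subseteq> {..<N} \<and>
          valid_locc {..<N*m} P \<and>
          (\<forall>\<chi>\<in>lleaves P \<psi>. \<exists>U. (\<forall>k<n. unitary2 (U k)) \<and>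
              in_state (\<Union>k\<in>pos ` {..<n}. blockset m k)
                (relabel (blockmap m pos) {..<n*m} (apply_logicals e m n U (encode e m n \<phi>))) \<chi>)"
  proof (rule bexI[of _ "(N, encode e m N \<psi>)"], simp only: prod.case, intro exI[of _ pos] exI[of _ P] conjI ballI)
    show "(N, encode e m N \<psi>) \<in> encoded_family e m \<Psi>" unfolding encoded_family_def using mem by force
    show "inj_on pos {..<n}" by (rule inj)
    show "pos ` {..<n} \<subseteq> {..<N}" by (rule sub)
    show "valid_locc {..<N*m} P" unfolding valid_locc_def by (rule P)
    fix lf assume lf: "lf \<in> lleaves P (encode e m N \<psi>)"
    have lf': "lf \<in> lleaves P (run [] (encode e m N \<psi>))" using lf by simp
    obtain \<chi> ops' where \<chi>: "\<chi> \<in> mleaves T \<psi>" and o1: "\<forall>(J, A)\<in>set ops'. J \<subseteq> BL m R" and o2: "lf = run ops' (encode e m N \<chi>)"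
      using mp[OF mp[OF mp[OF P2[THEN spec, THEN spec, THEN spec]]] lf'] by auto
    obtain U where U: "\<forall>k<n. unitary2 (U k)" and st: "in_state (pos ` {..<n}) (relabel pos {..<n} (apply_locals n U \<phi>)) \<chi>"
      using lv \<chi> by blast
    have st2: "in_state (\<Union>k\<in>pos ` {..<n}. blockset m k) (relabel (blockmap m pos) {..<n*m} (encode e m n (apply_locals n U \<phi>))) (encode e m N \<chi>)"
      by (rule enc_in_state[OF enc inj sub st])
    have o1': "\<forall>(J, A)\<in>set ops'. J \<inter> (\<Union>k\<in>pos ` {..<n}. blockset m k) = {}"
      using o1 dis by blast
    have "in_state (\<Union>k\<in>pos ` {..<n}. blockset m k) (relabel (blockmap m pos) {..<n*m} (encode e m n (apply_locals n U \<phi>))) lf"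
      unfolding o2 by (rule in_state_run[OF st2 o1'])
    thus "\<exists>U. (\<forall>k<n. unitary2 (U k)) \<and>
              in_state (\<Union>k\<in>pos ` {..<n}. blockset m k)
                (relabel (blockmap m pos) {..<n*m} (apply_logicals e m n U (encode e m n \<phi>))) lf"
      using U logicals_locals[OF enc, of n n U \<phi>] by auto
  qed
qed


end
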